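(* (i) If $v=2k$ is even, then $\mathrm{A}_q(v,2)=\sum_{0\le i\le v,\ i\equiv k\ (\mathrm{mod}\ 2)}\begin{bmatrix}v\\i\end{bmatrix}_q$, and the unique set of subspaces of $\mathbb{F}_q^v$ of this size with pairwise subspace distance $\ge2$ is the set of all subspaces $X$ with $\dim X\equiv k\pmod 2$. (ii) If $v=2k+1$ is odd, then $\mathrm{A}_q(v,2)=\sum_{i\text{ even}}\begin{bmatrix}v\\i\end{bmatrix}_q=\sum_{i\text{ odd}}\begin{bmatrix}v\\i\end{bmatrix}_q$, and there are exactly two sets of subspaces of $\mathbb{F}_q^v$ of this size with pairwise distance $\ge2$, namely the set of all even-dimensional subspaces and the set of all odd-dimensional subspaces; these two codes are isomorphic.
   Context: $\mathrm{d}_{\mathrm{S}}(X,Y)=\dim(X+Y)-\dim(X\cap Y)$. $\mathrm{A}_q(v,d)$ is the maximum size of a set of subspaces of $\mathbb{F}_q^v$ with pairwise subspace distance $\geq d$. Gaussian binomial $\begin{bmatrix}n\\k\end{bmatrix}_q$ = number of $k$-dimensional subspaces of $\mathbb{F}_q^n$. Two codes are isomorphic if some $\mathrm{d}_{\mathrm{S}}$-isometry of the subspace lattice of $\mathbb{F}_q^v$ maps one onto the other. *)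

theory Defs
  imports "HOL-Analysis.Analysis"
begin

text \<open>The ambient space F_q^v is modelled as the type 'a ^ 'n, where 'a is a finite
  field with q = CARD('a) elements and v = CARD('n).\<close>

definition subspaces :: "('a::field ^ 'n) set set" where
  "subspaces = {X. vec.subspace X}"

definition subspace_dist :: "('a::field ^ 'n) set \<Rightarrow> ('a ^ 'n) set \<Rightarrow> nat" where
  "subspace_dist X Y = vec.dim (vec.span (X \<union> Y)) - vec.dim (X \<inter> Y)"

definition is_code :: "nat \<Rightarrow> ('a::field ^ 'n) set set \<Rightarrow> bool" where
  "is_code d C \<longleftrightarrow> C \<subseteq> subspaces \<and> (\<forall>X\<in>C. \<forall>Y\<in>C. X \<noteq> Y \<longrightarrow> d \<le> subspace_dist X Y)"

text \<open>A_q(v,d) where q = CARD('a), v = CARD('n) (the type is fixed by the context).\<close>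
definition max_code_size :: "('a::{field,finite} ^ 'n) itself \<Rightarrow> nat \<Rightarrow> nat" where
  "max_code_size _ d = Max {card C | C :: ('a ^ 'n) set set. is_code d C}"

definition gauss_binom :: "nat \<Rightarrow> nat \<Rightarrow> nat \<Rightarrow> nat" where
  "gauss_binom q n k =
     (if k \<le> n then (\<Prod>i<k. q ^ (n - i) - 1) div (\<Prod>i<k. q ^ (i + 1) - 1) else 0)"

definition dS_isometry :: "(('a::field ^ 'n) set \<Rightarrow> ('a ^ 'n) set) \<Rightarrow> bool" where
  "dS_isometry f \<longleftrightarrow> bij_betw f subspaces subspaces \<and>
     (\<forall>X\<in>subspaces. \<forall>Y\<in>subspaces. subspace_dist (f X) (f Y) = subspace_dist X Y)"

definition codes_isomorphic :: "('a::field ^ 'n) set set \<Rightarrow> ('a ^ 'n) set set \<Rightarrow> bool" where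
  "codes_isomorphic C D \<longleftrightarrow> (\<exists>f. dS_isometry f \<and> f ` C = D)"

end

theory Submission
  imports Defs
begin
lemma card_span_indep:
  fixes B :: "('a::{field,finite}^'n) set"
  assumes "vec.independent B"
  shows "card (vec.span B) = CARD('a) ^ card B"
proof -
  have "finite B" by simp
  then show ?thesis using assms
  proof (induction B rule: finite_induct)
    case empty
    then show ?case by simp
  next
    case (insert b F)
    have bF: "b \<notin> vec.span F" and iF: "vec.independent F"
      using insert.prems insert.hyps by (auto simp: vec.independent_insert)
    have eq: "vec.span (insert b F) = (\<lambda>(c,u). c *s b + u) ` (UNIV \<times> vec.span F)"
    proof
      show "vec.span (insert b F) \<subseteq> (\<lambda>(c,u). c *s b + u) ` (UNIV \<times> vec.span F)"
      proof
        fix x assume "x \<in> vec.span (insert b F)"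
        then obtain k where "x - k *s b \<in> vec.span F" by (auto simp: vec.span_insert)
        then show "x \<in> (\<lambda>(c,u). c *s b + u) ` (UNIV \<times> vec.span F)"
          by (intro image_eqI[of _ _ "(k, x - k *s b)"]) auto
      qed
    next
      show "(\<lambda>(c,u). c *s b + u) ` (UNIV \<times> vec.span F) \<subseteq> vec.span (insert b F)"
      proof (clarsimp)
        fix c u assume "u \<in> vec.span F"
        then have "u \<in> vec.span (insert b F)" using vec.span_mono[of F "insert b F"] by blast
        moreover have "c *s b \<in> vec.span (insert b F)" by (simp add: vec.span_base vec.span_scale)
        ultimately show "c *s b + u \<in> vec.span (insert b F)" by (simp add: vec.span_add)
      qed
    qed
    have inj: "inj_on (\<lambda>(c,u). c *s b + u) (UNIV \<times> vec.span F)"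
    proof (rule inj_onI, clarsimp)
      fix c u c' u'
      assume u: "u \<in> vec.span F" and u': "u' \<in> vec.span F" and e: "c *s b + u = c' *s b + u'"
      have "(c - c') *s b = u' - u" using e by (simp add: algebra_simps vector_sub_rdistrib)
      moreover have "u' - u \<in> vec.span F" using u u' by (simp add: vec.span_diff)
      ultimately have "(c - c') *s b \<in> vec.span F" by simp
      then have "c = c'"
      proof (rule contrapos_pp)
        assume ne: "c \<noteq> c'"
        show "(c - c') *s b \<notin> vec.span F"
        proof
          assume "(c - c') *s b \<in> vec.span F"
          then have "inverse (c - c') *s ((c - c') *s b) \<in> vec.span F" by (rule vec.span_scale)
          moreover have "inverse (c - c') *s ((c - c') *s b) = b"
            using ne by (simp only: vec.scale_scale) simp
          ultimately show False using bF by simp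
        qed
      qed
      then show "c = c' \<and> u = u'" using e by simp
    qed
    have "card (vec.span (insert b F)) = CARD('a) * card (vec.span F)"
      unfolding eq by (simp add: card_image[OF inj] card_cartesian_product)
    then show ?case using insert.IH[OF iF] insert.hyps by simp
  qed
qed

lemma card_subspace:
  fixes W :: "('a::{field,finite}^'n) set"
  assumes "vec.subspace W"
  shows "card W = CARD('a) ^ vec.dim W"
proof -
  obtain B where B: "B \<subseteq> W" "vec.independent B" "W \<subseteq> vec.span B" "card B = vec.dim W"
    using vec.basis_exists by blast
  have "vec.span B = W" using B assms vec.span_subspace by blast
  then show ?thesis using card_span_indep[OF B(2)] B(4) by simp
qed

definition ILs :: "('a::field^'n) set \<Rightarrow> nat \<Rightarrow> ('a^'n) list set" where
  "ILs W j = {xs. length xs = j \<and> distinct xs \<and> set xs \<subseteq> W \<and> vec.independent (set xs)}"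

lemma finite_ILs: "finite (ILs (W::('a::{field,finite}^'n) set) j)"
proof -
  have "ILs W j \<subseteq> {xs. set xs \<subseteq> UNIV \<and> length xs = j}" by (auto simp: ILs_def)
  moreover have "finite {xs. set xs \<subseteq> (UNIV::('a^'n) set) \<and> length xs = j}"
    by (rule finite_lists_length_eq) simp
  ultimately show ?thesis by (rule finite_subset)
qed

lemma ILs_Suc:
  "ILs W (Suc j) = (\<lambda>(ys,w). w#ys) ` (SIGMA ys:ILs W j. W - vec.span (set ys))"
proof
  show "ILs W (Suc j) \<subseteq> (\<lambda>(ys,w). w#ys) ` (SIGMA ys:ILs W j. W - vec.span (set ys))"
  proof
    fix xs assume xs: "xs \<in> ILs W (Suc j)"
    then obtain w ys where e: "xs = w # ys" by (cases xs) (auto simp: ILs_def)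
    have "w \<notin> set ys" using xs e by (auto simp: ILs_def)
    then have "ys \<in> ILs W j \<and> w \<in> W - vec.span (set ys)"
      using xs e by (auto simp: ILs_def vec.independent_insert)
    then show "xs \<in> (\<lambda>(ys,w). w#ys) ` (SIGMA ys:ILs W j. W - vec.span (set ys))"
      using e by force
  qed
next
  show "(\<lambda>(ys,w). w#ys) ` (SIGMA ys:ILs W j. W - vec.span (set ys)) \<subseteq> ILs W (Suc j)"
  proof clarsimp
    fix ys w assume ys: "ys \<in> ILs W j" and w: "w \<in> W" "w \<notin> vec.span (set ys)"
    have "w \<notin> set ys" using w vec.span_base by blast
    then show "w # ys \<in> ILs W (Suc j)" using ys w by (auto simp: ILs_def vec.independent_insert)
  qed
qed

lemma card_ILs:
  fixes W :: "('a::{field,finite}^'n) set"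
  assumes W: "vec.subspace W"
  shows "card (ILs W j) = (\<Prod>t<j. CARD('a) ^ vec.dim W - CARD('a) ^ t)"
proof (induction j)
  case 0
  have "ILs W 0 = {[]}" by (auto simp: ILs_def vec.independent_empty)
  then show ?case by simp
next
  case (Suc j)
  have inj: "inj_on (\<lambda>(ys,w). w#ys) (SIGMA ys:ILs W j. W - vec.span (set ys))"
    by (auto simp: inj_on_def)
  have each: "card (W - vec.span (set ys)) = CARD('a) ^ vec.dim W - CARD('a) ^ j"
    if ys: "ys \<in> ILs W j" for ys
  proof -
    have sub: "vec.span (set ys) \<subseteq> W" using ys W vec.span_minimal[of "set ys" W] by (auto simp: ILs_def)
    have "card (vec.span (set ys)) = CARD('a) ^ j"
      using ys card_span_indep[of "set ys"] by (auto simp: ILs_def distinct_card)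
    then show ?thesis using card_Diff_subset[OF _ sub] card_subspace[OF W] by simp
  qed
  have "card (ILs W (Suc j)) = card (SIGMA ys:ILs W j. W - vec.span (set ys))"
    unfolding ILs_Suc by (rule card_image[OF inj])
  also have "\<dots> = (\<Sum>ys\<in>ILs W j. card (W - vec.span (set ys)))"
    by (rule card_SigmaI) (auto simp: finite_ILs)
  also have "\<dots> = card (ILs W j) * (CARD('a) ^ vec.dim W - CARD('a) ^ j)"
    using each by simp
  finally show ?case using Suc.IH by simp
qed

lemma card_fibers:
  assumes "finite A" "finite T" "f ` A \<subseteq> T"
  shows "card A = (\<Sum>t\<in>T. card {a \<in> A. f a = t})"
  using sum.group[OF assms, of "\<lambda>_. 1::nat"] by simp

definition Sub :: "('a::field^'n) set \<Rightarrow> nat \<Rightarrow> ('a^'n) set set" where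
  "Sub W j = {X. vec.subspace X \<and> X \<subseteq> W \<and> vec.dim X = j}"

lemma card_Sub:
  fixes W :: "('a::{field,finite}^'n) set"
  assumes W: "vec.subspace W"
  shows "card (Sub W j) * (\<Prod>t<j. CARD('a) ^ j - CARD('a) ^ t)
       = (\<Prod>t<j. CARD('a) ^ vec.dim W - CARD('a) ^ t)"
proof -
  let ?f = "\<lambda>xs. vec.span (set xs)"
  have img: "?f ` ILs W j \<subseteq> Sub W j"
  proof
    fix X assume "X \<in> ?f ` ILs W j"
    then obtain xs where xs: "xs \<in> ILs W j" "X = ?f xs" by auto
    then show "X \<in> Sub W j" using W vec.span_minimal[of "set xs" W]
      vec.dim_eq_card_independent[of "set xs"]
      by (auto simp: Sub_def ILs_def distinct_card)
  qed
  have fib: "{xs \<in> ILs W j. ?f xs = X} = ILs X j" if X: "X \<in> Sub W j" for X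
  proof
    show "{xs \<in> ILs W j. ?f xs = X} \<subseteq> ILs X j"
      by (auto simp: ILs_def intro: vec.span_base)
    show "ILs X j \<subseteq> {xs \<in> ILs W j. ?f xs = X}"
    proof clarify
      fix xs assume xs: "xs \<in> ILs X j"
      have sx: "set xs \<subseteq> X" and ix: "vec.independent (set xs)" and cx: "card (set xs) = j"
        using xs by (auto simp: ILs_def distinct_card)
      have "X \<subseteq> ?f xs"
        using X by (intro vec.card_ge_dim_independent[OF sx ix]) (auto simp: Sub_def cx)
      moreover have "?f xs \<subseteq> X" using X sx vec.span_minimal[of "set xs" X] by (auto simp: Sub_def)
      ultimately show "xs \<in> ILs W j \<and> ?f xs = X" using xs X by (auto simp: ILs_def Sub_def)
    qed
  qed
  have finS: "finite (Sub W j)" by simp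
  have "card (ILs W j) = (\<Sum>X\<in>Sub W j. card {xs \<in> ILs W j. ?f xs = X})"
    by (rule card_fibers[OF finite_ILs finS img])
  also have "\<dots> = (\<Sum>X\<in>Sub W j. card (ILs X j))"
    by (rule sum.cong) (auto simp: fib)
  also have "\<dots> = (\<Sum>X\<in>Sub W j. (\<Prod>t<j. CARD('a) ^ j - CARD('a) ^ t))"
    by (rule sum.cong) (auto simp: Sub_def card_ILs)
  finally show ?thesis using card_ILs[OF W, of j] by simp
qed

lemma prod_rev_lessThan: "(\<Prod>t<j. f (j - t)) = (\<Prod>t<j. f (Suc t) :: nat)"
  by (rule prod.reindex_bij_witness[where i="\<lambda>i. j - Suc i" and j="\<lambda>i. j - Suc i"]) (auto simp: Suc_diff_Suc)

lemma prod_split_pow: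
  fixes q :: nat
  assumes "j \<le> d"
  shows "(\<Prod>t<j. q ^ d - q ^ t) = (\<Prod>t<j. q ^ t) * (\<Prod>t<j. q ^ (d - t) - 1)"
proof -
  have "(\<Prod>t<j. q ^ d - q ^ t) = (\<Prod>t<j. q ^ t * (q ^ (d - t) - 1))"
  proof (rule prod.cong[OF refl])
    fix t assume "t \<in> {..<j}"
    then have "t \<le> d" using assms by simp
    then have h: "q ^ t * q ^ (d - t) = q ^ d" by (simp add: power_add[symmetric])
    have "q ^ t * (q ^ (d - t) - 1) = q ^ t * q ^ (d - t) - q ^ t * 1"
      by (rule diff_mult_distrib2)
    then show "q ^ d - q ^ t = q ^ t * (q ^ (d - t) - 1)" by (simp only: h mult_1_right)
  qed
  then show ?thesis by (simp add: prod.distrib)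
qed

abbreviation LL :: "('a::field^'n) itself \<Rightarrow> nat \<Rightarrow> ('a^'n) set set" where
  "LL T i \<equiv> Sub UNIV i"

lemma q_ge2: "2 \<le> CARD('a::{field,finite})"
proof -
  have "card {0::'a, 1} = 2" by simp
  moreover have "card {0::'a, 1} \<le> CARD('a)" by (rule card_mono) auto
  ultimately show ?thesis by simp
qed

lemma qpow_gt1: "0 < n \<Longrightarrow> 1 < CARD('a::{field,finite}) ^ n"
  using q_ge2[where 'a='a] by (intro one_less_power) auto

lemma qpos1: "0 < CARD('a::{field,finite}) ^ (t+1) - 1"
  using qpow_gt1[of "t+1", where 'a='a] by simp

lemma qpos2: "t < n \<Longrightarrow> 0 < CARD('a::{field,finite}) ^ (n - t) - 1"
  using qpow_gt1[of "n - t", where 'a='a] by simp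

lemma key_count:
  fixes T :: "('a::{field,finite}^'n) itself"
  assumes "j \<le> CARD('n)"
  shows "card (Sub (UNIV::('a^'n) set) j) * (\<Prod>t<j. CARD('a) ^ (t+1) - 1)
       = (\<Prod>t<j. CARD('a) ^ (CARD('n) - t) - 1)"
proof -
  let ?q = "CARD('a)"
  have c: "card (Sub (UNIV::('a^'n) set) j) * (\<Prod>t<j. ?q ^ j - ?q ^ t)
       = (\<Prod>t<j. ?q ^ CARD('n) - ?q ^ t)"
    using card_Sub[of "UNIV::('a^'n) set" j] by (simp add: vec_dim_card card_cart_basis)
  have K: "(\<Prod>t<j. ?q ^ t) > 0" using q_ge2[where 'a='a] by (simp add: prod_pos)
  have "(\<Prod>t<j. ?q ^ j - ?q ^ t) = (\<Prod>t<j. ?q ^ t) * (\<Prod>t<j. ?q ^ (t+1) - 1)"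
    using prod_split_pow[of j j ?q] prod_rev_lessThan[of "\<lambda>s. ?q ^ s - 1" j] by simp
  moreover have "(\<Prod>t<j. ?q ^ CARD('n) - ?q ^ t) = (\<Prod>t<j. ?q ^ t) * (\<Prod>t<j. ?q ^ (CARD('n) - t) - 1)"
    using prod_split_pow[OF assms] by simp
  ultimately have "(\<Prod>t<j. ?q ^ t) * (card (Sub (UNIV::('a^'n) set) j) * (\<Prod>t<j. ?q ^ (t+1) - 1))
     = (\<Prod>t<j. ?q ^ t) * (\<Prod>t<j. ?q ^ (CARD('n) - t) - 1)"
    using c by (simp add: ac_simps)
  then show ?thesis using K by simp
qed

lemma gauss_eq_card:
  assumes "j \<le> CARD('n)"
  shows "gauss_binom CARD('a::{field,finite}) CARD('n) j = card (Sub (UNIV::('a^'n) set) j)"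
proof -
  have D: "(\<Prod>t<j. CARD('a) ^ (t+1) - 1) > 0"
    by (intro prod_pos ballI qpos1)
  have "gauss_binom CARD('a) CARD('n) j
     = (card (Sub (UNIV::('a^'n) set) j) * (\<Prod>t<j. CARD('a) ^ (t+1) - 1)) div (\<Prod>t<j. CARD('a) ^ (t+1) - 1)"
    unfolding gauss_binom_def key_count[OF assms, where 'a='a] using assms by simp
  also have "\<dots> = card (Sub (UNIV::('a^'n) set) j)" using D by simp
  finally show ?thesis .
qed

lemma ratio_count:
  assumes "m + 1 \<le> CARD('n)"
  shows "card (Sub (UNIV::('a::{field,finite}^'n) set) (m+1)) * (CARD('a) ^ (m+1) - 1)
       = card (Sub (UNIV::('a^'n) set) m) * (CARD('a) ^ (CARD('n) - m) - 1)"
proof -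
  let ?D = "(\<Prod>t<m. CARD('a) ^ (t+1) - 1)"
  have D: "?D > 0"
    by (intro prod_pos ballI qpos1)
  have k1: "card (Sub (UNIV::('a^'n) set) (m+1)) * (?D * (CARD('a) ^ (m+1) - 1))
     = (\<Prod>t<m. CARD('a) ^ (CARD('n) - t) - 1) * (CARD('a) ^ (CARD('n) - m) - 1)"
    using key_count[OF assms, where 'a='a] by (simp add: ac_simps)
  have k0: "card (Sub (UNIV::('a^'n) set) m) * ?D = (\<Prod>t<m. CARD('a) ^ (CARD('n) - t) - 1)"
    using key_count[of m, where 'a='a and 'n='n] assms by simp
  have eq: "?D * (card (Sub (UNIV::('a^'n) set) (m+1)) * (CARD('a) ^ (m+1) - 1))
      = ?D * (card (Sub (UNIV::('a^'n) set) m) * (CARD('a) ^ (CARD('n) - m) - 1))"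
    using k1 k0 by (simp add: ac_simps)
  have ne: "?D \<noteq> 0" using D by linarith
  show ?thesis using eq unfolding mult_left_cancel[OF ne] .
qed

lemma count_pos:
  assumes "m \<le> CARD('n)"
  shows "card (Sub (UNIV::('a::{field,finite}^'n) set) m) > 0"
proof -
  have "(\<Prod>t<m. CARD('a) ^ (CARD('n) - t) - 1) > 0"
    using assms by (intro prod_pos ballI qpos2) auto
  then have "card (Sub (UNIV::('a^'n) set) m) * (\<Prod>t<m. CARD('a) ^ (t+1) - 1) > 0"
    using key_count[OF assms, where 'a='a] by simp
  then show ?thesis by (simp add: gr0I)
qed

lemma count_incr:
  assumes "2 * (m + 1) \<le> CARD('n)"
  shows "card (Sub (UNIV::('a::{field,finite}^'n) set) m) < card (Sub (UNIV::('a^'n) set) (m+1))"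
proof -
  let ?q = "CARD('a)"
  have q: "2 \<le> ?q" by (rule q_ge2)
  have r: "card (Sub (UNIV::('a^'n) set) (m+1)) * (?q ^ (m+1) - 1)
       = card (Sub (UNIV::('a^'n) set) m) * (?q ^ (CARD('n) - m) - 1)"
    using ratio_count[where 'a='a and 'n='n, of m] assms by simp
  have p: "card (Sub (UNIV::('a^'n) set) m) > 0" using count_pos[of m, where 'a='a and 'n='n] assms by simp
  have a1: "?q ^ (m+1) < ?q ^ (CARD('n) - m)" using q assms by (intro power_strict_increasing) auto
  have a0: "1 \<le> ?q ^ (m+1)" using q by simp
  have "?q ^ (m+1) - 1 < ?q ^ (CARD('n) - m) - 1" by (rule diff_less_mono[OF a1 a0])
  then have "card (Sub (UNIV::('a^'n) set) m) * (?q ^ (m+1) - 1)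
      < card (Sub (UNIV::('a^'n) set) m) * (?q ^ (CARD('n) - m) - 1)"
    using p by (simp only: mult_less_mono2)
  then have "card (Sub (UNIV::('a^'n) set) m) * (?q ^ (m+1) - 1)
      < card (Sub (UNIV::('a^'n) set) (m+1)) * (?q ^ (m+1) - 1)" using r by simp
  then show ?thesis by (simp add: mult_less_cancel2)
qed

lemma count_mid:
  assumes "CARD('n) = 2 * k" "k \<ge> 1"
  shows "2 * card (Sub (UNIV::('a::{field,finite}^'n) set) (k - 1)) < card (Sub (UNIV::('a^'n) set) k)"
proof -
  let ?q = "CARD('a)"
  have q: "2 \<le> ?q" by (rule q_ge2)
  have r: "card (Sub (UNIV::('a^'n) set) k) * (?q ^ k - 1)
       = card (Sub (UNIV::('a^'n) set) (k-1)) * (?q ^ (k + 1) - 1)"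
    using ratio_count[where 'a='a and 'n='n, of "k-1"] assms by simp
  have p: "card (Sub (UNIV::('a^'n) set) (k-1)) > 0" using count_pos[of "k-1", where 'a='a and 'n='n] assms by simp
  have a0: "1 \<le> ?q ^ k" using q by simp
  have "2 * ?q ^ k \<le> ?q ^ (k+1)" using q by simp
  moreover have gen: "\<And>x y::nat. 1 \<le> x \<Longrightarrow> 2*x \<le> y \<Longrightarrow> 2*(x-1) < y - 1" by arith
  ultimately have a1: "2 * (?q ^ k - 1) < ?q ^ (k+1) - 1" using a0 by blast
  have "card (Sub (UNIV::('a^'n) set) (k-1)) * (2 * (?q ^ k - 1))
      < card (Sub (UNIV::('a^'n) set) (k-1)) * (?q ^ (k + 1) - 1)"
    using p a1 by (simp only: mult_less_mono2)
  then have "(2 * card (Sub (UNIV::('a^'n) set) (k-1))) * (?q ^ k - 1)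
      < card (Sub (UNIV::('a^'n) set) k) * (?q ^ k - 1)" using r by (simp add: ac_simps)
  then show ?thesis by (simp add: mult_less_cancel2)
qed

definition dotp :: "'a::field^'n \<Rightarrow> 'a^'n \<Rightarrow> 'a" where
  "dotp x y = (\<Sum>i\<in>UNIV. x$i * y$i)"

definition perp :: "('a::field^'n) set \<Rightarrow> ('a^'n) set" where
  "perp S = {y. \<forall>x\<in>S. dotp x y = 0}"

lemma dotp_sym: "dotp x y = dotp y x"
  unfolding dotp_def by (simp add: mult.commute)

lemma dotp_add_left: "dotp (x + z) y = dotp x y + dotp z y"
  unfolding dotp_def by (simp add: distrib_right sum.distrib)

lemma dotp_scale_left: "dotp (c *s x) y = c * dotp x y"
  unfolding dotp_def by (simp add: sum_distrib_left mult.assoc)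

lemma dotp_zero_left[simp]: "dotp 0 y = 0"
  unfolding dotp_def by simp

lemma dotp_add_right: "dotp y (x + z) = dotp y x + dotp y z"
  by (simp add: dotp_sym[of y] dotp_add_left)

lemma dotp_scale_right: "dotp y (c *s x) = c * dotp y x"
  by (simp add: dotp_sym[of y] dotp_scale_left)

lemma subspace_perp: "vec.subspace (perp S)"
  unfolding vec.subspace_def perp_def
  by (auto simp: dotp_add_right dotp_scale_right dotp_sym[of _ 0])

lemma subspace_hyper: "vec.subspace {x. dotp x y = 0}"
  unfolding vec.subspace_def
  by (auto simp: dotp_add_left dotp_scale_left)

lemma perp_span: "perp (vec.span S) = perp S"
proof
  show "perp (vec.span S) \<subseteq> perp S" unfolding perp_def using vec.span_base by blast
  show "perp S \<subseteq> perp (vec.span S)"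
  proof
    fix y assume "y \<in> perp S"
    then have "S \<subseteq> {x. dotp x y = 0}" by (auto simp: perp_def)
    then have "vec.span S \<subseteq> {x. dotp x y = 0}" using vec.span_minimal subspace_hyper by blast
    then show "y \<in> perp (vec.span S)" by (auto simp: perp_def)
  qed
qed

lemma perp_insert: "perp (insert b S) = perp S \<inter> {y. dotp b y = 0}"
  unfolding perp_def by auto

lemma perp_Un: "perp (A \<union> B) = perp A \<inter> perp B"
  unfolding perp_def by auto

lemma perp_empty[simp]: "perp {} = UNIV"
  unfolding perp_def by auto

lemma perp_UNIV: "perp (UNIV :: ('a::field^'n) set) = {0}"
proof -
  have "y = 0" if "y \<in> perp (UNIV :: ('a::field^'n) set)" for y
  proof -
    have "y $ i = 0" for i
    proof -
      have "dotp (axis i 1) y = 0" using that by (auto simp: perp_def)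
      moreover have "dotp (axis i 1) y = (\<Sum>j\<in>UNIV. if j = i then y $ j else 0)"
        unfolding dotp_def by (rule sum.cong) (auto simp: axis_def)
      then have "dotp (axis i 1) y = y $ i" by simp
      ultimately show ?thesis by simp
    qed
    then show ?thesis by (simp add: vec_eq_iff)
  qed
  then show ?thesis using subspace_perp[of "UNIV :: ('a::field^'n) set"] vec.subspace_0 by blast
qed

lemma dim_hyper:
  assumes U: "vec.subspace U"
  shows "vec.dim U \<le> vec.dim (U \<inter> {y. dotp b y = 0}) + 1"
proof (cases "U \<subseteq> {y. dotp b y = 0}")
  case True
  then have "U \<inter> {y. dotp b y = 0} = U" by blast
  then show ?thesis by simp
next
  case False
  then obtain u0 where u0: "u0 \<in> U" "dotp b u0 \<noteq> 0" by blast
  let ?H = "U \<inter> {y. dotp b y = 0}"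
  have "U \<subseteq> vec.span (insert u0 ?H)"
  proof
    fix u assume u: "u \<in> U"
    define c where "c = dotp b u / dotp b u0"
    have m: "u - c *s u0 \<in> U" using u u0 U by (simp add: vec.subspace_diff vec.subspace_scale)
    have "dotp b (u - c *s u0) = dotp b u - c * dotp b u0"
      unfolding dotp_def by (simp add: algebra_simps sum_subtractf sum_distrib_left)
    also have "\<dots> = 0" using u0 by (simp add: c_def)
    finally have "u - c *s u0 \<in> ?H" using m by simp
    then have "u - c *s u0 \<in> vec.span ?H" by (rule vec.span_base)
    then show "u \<in> vec.span (insert u0 ?H)" by (auto simp: vec.span_insert)
  qed
  then have "vec.dim U \<le> vec.dim (vec.span (insert u0 ?H))" by (rule vec.dim_subset)
  also have "\<dots> \<le> vec.dim ?H + 1" by (simp add: vec.dim_insert)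
  finally show ?thesis .
qed

lemma dim_perp_insert: "vec.dim (perp S) \<le> vec.dim (perp (insert b S)) + 1"
  unfolding perp_insert by (rule dim_hyper[OF subspace_perp])

lemma dim_perp_Un:
  assumes "finite T"
  shows "vec.dim (perp S) \<le> vec.dim (perp (S \<union> T)) + card T"
  using assms
proof (induction T rule: finite_induct)
  case empty then show ?case by simp
next
  case (insert b T)
  have "vec.dim (perp (S \<union> T)) \<le> vec.dim (perp (insert b (S \<union> T))) + 1"
    by (rule dim_perp_insert)
  then show ?case using insert by simp
qed

lemma subspace_eq_dim:
  fixes X Y :: "('a::field^'n) set"
  assumes "vec.subspace X" "vec.subspace Y" "X \<subseteq> Y" "vec.dim Y \<le> vec.dim X"
  shows "X = Y"
proof -
  obtain B where B: "B \<subseteq> X" "vec.independent B" "X \<subseteq> vec.span B" "card B = vec.dim X"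
    using vec.basis_exists by blast
  have "Y \<subseteq> vec.span B" using B assms by (intro vec.card_ge_dim_independent) auto
  moreover have "vec.span B \<subseteq> X" using B assms vec.span_minimal by blast
  ultimately show ?thesis using assms by blast
qed

lemma dim_perp:
  fixes X :: "('a::{field,finite}^'n) set"
  assumes X: "vec.subspace X"
  shows "vec.dim (perp X) = CARD('n) - vec.dim X"
proof -
  obtain B where B: "B \<subseteq> X" "vec.independent B" "X \<subseteq> vec.span B" "card B = vec.dim X"
    using vec.basis_exists by blast
  have sB: "vec.span B = X" using B X vec.span_subspace by blast
  have pB: "perp X = perp B" using perp_span[of B] sB by simp
  have lo: "CARD('n) \<le> vec.dim (perp B) + card B"
    using dim_perp_Un[of B "{}"] by (simp add: vec_dim_card card_cart_basis)
  obtain B' where B': "B \<subseteq> B'" "B' \<subseteq> UNIV" "vec.independent B'" "UNIV \<subseteq> vec.span B'"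
    by (rule vec.maximal_independent_subset_extend[OF subset_UNIV B(2)])
  have cB': "card B' = CARD('n)"
    using vec.basis_card_eq_dim[OF B'(2) B'(4) B'(3)] by (simp add: vec_dim_card card_cart_basis)
  have "perp (B \<union> (B' - B)) = {0}"
  proof -
    have "B \<union> (B' - B) = B'" using B' by blast
    moreover have "vec.span B' = UNIV" using B' by blast
    ultimately show ?thesis using perp_span[of B'] perp_UNIV by metis
  qed
  then have "vec.dim (perp B) \<le> card (B' - B)"
    using dim_perp_Un[of "B' - B" B] by simp
  also have "\<dots> = CARD('n) - card B" using B' cB' by (simp add: card_Diff_subset)
  finally show ?thesis using lo pB B by simp
qed

lemma perp_perp:
  fixes X :: "('a::{field,finite}^'n) set"
  assumes X: "vec.subspace X"
  shows "perp (perp X) = X"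
proof -
  have sub: "X \<subseteq> perp (perp X)" by (auto simp: perp_def dotp_sym)
  have "vec.dim X \<le> CARD('n)" by (rule dim_subset_UNIV_cart_gen)
  then have "vec.dim (perp (perp X)) = vec.dim X"
    using dim_perp[OF X] dim_perp[OF subspace_perp[of X]] by simp
  then show ?thesis using subspace_eq_dim[OF X subspace_perp sub] by simp
qed

lemma perp_sum:
  "perp (vec.span (X \<union> Y)) = perp X \<inter> perp Y"
  by (simp add: perp_span perp_Un)

lemma perp_inter:
  fixes X Y :: "('a::{field,finite}^'n) set"
  assumes "vec.subspace X" "vec.subspace Y"
  shows "perp (X \<inter> Y) = vec.span (perp X \<union> perp Y)"
proof -
  have "perp (vec.span (perp X \<union> perp Y)) = X \<inter> Y"
    using perp_sum[of "perp X" "perp Y"] perp_perp[OF assms(1)] perp_perp[OF assms(2)] by simp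
  then have "perp (X \<inter> Y) = perp (perp (vec.span (perp X \<union> perp Y)))" by simp
  also have "\<dots> = vec.span (perp X \<union> perp Y)" by (rule perp_perp) simp
  finally show ?thesis .
qed

lemma dist_perp:
  fixes X Y :: "('a::{field,finite}^'n) set"
  assumes X: "vec.subspace X" and Y: "vec.subspace Y"
  shows "subspace_dist (perp X) (perp Y) = subspace_dist X Y"
proof -
  have i: "vec.subspace (X \<inter> Y)" using X Y by (rule vec.subspace_inter)
  have a: "vec.dim (vec.span (perp X \<union> perp Y)) = CARD('n) - vec.dim (X \<inter> Y)"
    using perp_inter[OF X Y] dim_perp[OF i] by simp
  have b: "vec.dim (perp X \<inter> perp Y) = CARD('n) - vec.dim (vec.span (X \<union> Y))"
    using perp_sum[of X Y] dim_perp[of "vec.span (X \<union> Y)"] by simp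
  have c: "vec.dim (vec.span (X \<union> Y)) \<le> CARD('n)" by (rule dim_subset_UNIV_cart_gen)
  have d: "vec.dim (X \<inter> Y) \<le> vec.dim (vec.span (X \<union> Y))"
    by (rule vec.dim_subset) (auto intro: vec.span_base)
  show ?thesis unfolding subspace_dist_def a b using c d by simp
qed

lemma card_up:
  fixes X :: "('a::{field,finite}^'n) set"
  assumes X: "X \<in> Sub UNIV i"
  shows "card {Y \<in> Sub UNIV (i+1). X \<subseteq> Y} * (CARD('a) ^ (i+1) - CARD('a) ^ i)
       = CARD('a) ^ CARD('n) - CARD('a) ^ i"
proof -
  let ?U = "{Y \<in> Sub (UNIV::('a^'n) set) (i+1). X \<subseteq> Y}"
  let ?f = "\<lambda>w. vec.span (insert w X)"
  have sX: "vec.subspace X" and dX: "vec.dim X = i" using X by (auto simp: Sub_def)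
  have spX: "vec.span X = X" using sX by simp
  have img: "?f ` (UNIV - X) \<subseteq> ?U"
  proof
    fix Y assume "Y \<in> ?f ` (UNIV - X)"
    then obtain w where w: "w \<notin> X" "Y = ?f w" by auto
    have wn: "w \<notin> vec.span X" unfolding spX using w(1) .
    have "vec.dim (insert w X) = i + 1" using wn dX by (simp add: vec.dim_insert)
    then show "Y \<in> ?U" using w by (auto simp: Sub_def intro: vec.span_base)
  qed
  have fib: "{w \<in> UNIV - X. ?f w = Y} = Y - X" if Y: "Y \<in> ?U" for Y
  proof
    show "{w \<in> UNIV - X. ?f w = Y} \<subseteq> Y - X" by (auto intro: vec.span_base)
    show "Y - X \<subseteq> {w \<in> UNIV - X. ?f w = Y}"
    proof clarify
      fix w assume w: "w \<in> Y" "w \<notin> X"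
      have sY: "vec.subspace Y" "vec.dim Y = i + 1" "X \<subseteq> Y" using Y by (auto simp: Sub_def)
      have sub: "?f w \<subseteq> Y" using w sY vec.span_minimal[of "insert w X" Y] by auto
      have wn: "w \<notin> vec.span X" unfolding spX using w(2) .
      have "vec.dim (?f w) = i + 1" using wn dX by (simp add: vec.dim_insert)
      then have "?f w = Y" using subspace_eq_dim[OF vec.subspace_span sY(1) sub] sY by simp
      then show "w \<in> UNIV - X \<and> ?f w = Y" using w by simp
    qed
  qed
  have cY: "card (Y - X) = CARD('a) ^ (i+1) - CARD('a) ^ i" if Y: "Y \<in> ?U" for Y
  proof -
    have "vec.subspace Y" "vec.dim Y = i + 1" "X \<subseteq> Y" using Y by (auto simp: Sub_def)
    then show ?thesis using card_Diff_subset[of X Y] card_subspace[OF sX] card_subspace[of Y] dX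
      by simp
  qed
  have "card (UNIV - X) = (\<Sum>Y\<in>?U. card {w \<in> UNIV - X. ?f w = Y})"
    by (rule card_fibers[OF _ _ img]) auto
  also have "\<dots> = (\<Sum>Y\<in>?U. CARD('a) ^ (i+1) - CARD('a) ^ i)"
  proof (rule sum.cong[OF refl])
    fix Y assume Y: "Y \<in> ?U"
    show "card {w \<in> UNIV - X. ?f w = Y} = CARD('a) ^ (i+1) - CARD('a) ^ i"
      unfolding fib[OF Y] by (rule cY[OF Y])
  qed
  also have "\<dots> = card ?U * (CARD('a) ^ (i+1) - CARD('a) ^ i)" by simp
  finally have e: "card (UNIV - X) = card ?U * (CARD('a) ^ (i+1) - CARD('a) ^ i)" .
  have "card (UNIV::('a^'n) set) = CARD('a) ^ CARD('n)"
    using card_subspace[OF vec.subspace_UNIV] by (simp add: vec_dim_card)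
  then have "card (UNIV - X) = CARD('a) ^ CARD('n) - CARD('a) ^ i"
    using card_Diff_subset[of X UNIV] card_subspace[OF sX] dX by simp
  then show ?thesis using e by simp
qed

definition UU :: "nat \<Rightarrow> nat \<Rightarrow> nat \<Rightarrow> nat" where
  "UU q v i = (q ^ v - q ^ i) div (q ^ (i+1) - q ^ i)"

definition DD :: "nat \<Rightarrow> nat \<Rightarrow> nat" where
  "DD q i = (\<Prod>t<i. q ^ (i+1) - q ^ t) div (\<Prod>t<i. q ^ i - q ^ t)"

lemma qdiff_pos: "t < n \<Longrightarrow> 0 < CARD('a::{field,finite}) ^ n - CARD('a) ^ t"
  using q_ge2[where 'a='a] by (simp add: power_strict_increasing)

lemma card_up':
  fixes X :: "('a::{field,finite}^'n) set"
  assumes X: "X \<in> Sub UNIV i"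
  shows "card {Y \<in> Sub UNIV (i+1). X \<subseteq> Y} = UU CARD('a) CARD('n) i"
proof -
  have "CARD('a) ^ i < CARD('a) ^ (i+1)" using q_ge2[where 'a='a] by (intro power_strict_increasing) auto
  then have pos: "CARD('a) ^ (i+1) - CARD('a) ^ i > 0" by simp
  have "UU CARD('a) CARD('n) i = (card {Y \<in> Sub UNIV (i+1). X \<subseteq> Y} * (CARD('a) ^ (i+1) - CARD('a) ^ i))
      div (CARD('a) ^ (i+1) - CARD('a) ^ i)" unfolding UU_def card_up[OF X] ..
  also have "\<dots> = card {Y \<in> Sub UNIV (i+1). X \<subseteq> Y}" using pos by simp
  finally show ?thesis by simp
qed

lemma card_down:
  fixes Y :: "('a::{field,finite}^'n) set"
  assumes Y: "Y \<in> Sub UNIV (i+1)"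
  shows "card (Sub Y i) = DD CARD('a) i" and "DD CARD('a) i > 0"
proof -
  have sY: "vec.subspace Y" "vec.dim Y = i+1" using Y by (auto simp: Sub_def)
  have P: "(\<Prod>t<i. CARD('a) ^ i - CARD('a) ^ t) > 0"
    by (intro prod_pos ballI qdiff_pos) auto
  have P2: "(\<Prod>t<i. CARD('a) ^ (i+1) - CARD('a) ^ t) > 0"
    by (intro prod_pos ballI qdiff_pos) auto
  have e: "card (Sub Y i) * (\<Prod>t<i. CARD('a) ^ i - CARD('a) ^ t) = (\<Prod>t<i. CARD('a) ^ (i+1) - CARD('a) ^ t)"
    using card_Sub[OF sY(1), of i] sY(2) by simp
  have "DD CARD('a) i = (card (Sub Y i) * (\<Prod>t<i. CARD('a) ^ i - CARD('a) ^ t)) div (\<Prod>t<i. CARD('a) ^ i - CARD('a) ^ t)"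
    unfolding DD_def e ..
  also have "\<dots> = card (Sub Y i)" using P by simp
  finally show "card (Sub Y i) = DD CARD('a) i" by simp
  have "card (Sub Y i) \<noteq> 0" using e P2 by (metis mult_0 less_irrefl)
  then show "DD CARD('a) i > 0" using \<open>card (Sub Y i) = DD CARD('a) i\<close> by simp
qed

lemma sum_card_swap:
  assumes "finite A" "finite B"
  shows "(\<Sum>a\<in>A. card {b\<in>B. R a b}) = (\<Sum>b\<in>B. card {a\<in>A. R a b})"
proof -
  have c1: "\<And>a. {b\<in>B. R a b} = B \<inter> {b. R a b}" and c2: "\<And>b. {a\<in>A. R a b} = A \<inter> {a. R a b}" by auto
  have "(\<Sum>a\<in>A. card {b\<in>B. R a b}) = (\<Sum>a\<in>A. \<Sum>b\<in>B. if R a b then 1 else 0)"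
    using assms by (simp add: sum.If_cases c1)
  also have "\<dots> = (\<Sum>b\<in>B. \<Sum>a\<in>A. if R a b then 1 else 0)" by (rule sum.swap)
  also have "\<dots> = (\<Sum>b\<in>B. card {a\<in>A. R a b})"
    using assms by (simp add: sum.If_cases c2)
  finally show ?thesis .
qed

lemma level_ineq:
  fixes S :: "('a::{field,finite}^'n) set set"
  assumes S: "S \<subseteq> Sub UNIV i" and i: "i + 1 \<le> CARD('n)"
  shows "card S * card (Sub (UNIV::('a^'n) set) (i+1))
       \<le> card {Y \<in> Sub UNIV (i+1). \<exists>X\<in>S. X \<subseteq> Y} * card (Sub (UNIV::('a^'n) set) i)"
proof -
  let ?L0 = "Sub (UNIV::('a^'n) set) i"
  let ?L1 = "Sub (UNIV::('a^'n) set) (i+1)"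
  let ?M = "{Y \<in> ?L1. \<exists>X\<in>S. X \<subseteq> Y}"
  let ?u = "UU CARD('a) CARD('n) i" and ?d = "DD CARD('a) i"
  have fS: "finite S" by simp
  have "(\<Sum>X\<in>S. card {Y \<in> ?L1. X \<subseteq> Y}) = (\<Sum>X\<in>S. ?u)"
    by (rule sum.cong[OF refl], rule card_up') (use S in auto)
  then have a: "card S * ?u = (\<Sum>X\<in>S. card {Y \<in> ?L1. X \<subseteq> Y})" by simp
  also have "\<dots> = (\<Sum>Y\<in>?L1. card {X\<in>S. X \<subseteq> Y})" by (rule sum_card_swap) auto
  also have "\<dots> \<le> (\<Sum>Y\<in>?L1. if Y \<in> ?M then ?d else 0)"
  proof (rule sum_mono)
    fix Y assume Y: "Y \<in> ?L1"
    show "card {X\<in>S. X \<subseteq> Y} \<le> (if Y \<in> ?M then ?d else 0)"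
    proof (cases "Y \<in> ?M")
      case True
      have "{X\<in>S. X \<subseteq> Y} \<subseteq> Sub Y i" using S by (auto simp: Sub_def)
      then have "card {X\<in>S. X \<subseteq> Y} \<le> card (Sub Y i)" by (intro card_mono) auto
      then show ?thesis using True card_down(1)[OF Y] by simp
    next
      case False
      then have "{X\<in>S. X \<subseteq> Y} = {}" using Y by auto
      then show ?thesis by simp
    qed
  qed
  also have "\<dots> = (\<Sum>Y\<in>?L1 \<inter> ?M. ?d)" by (rule sum.inter_restrict[symmetric]) simp
  also have "?L1 \<inter> ?M = ?M" by blast
  also have "(\<Sum>Y\<in>?M. ?d) = card ?M * ?d" by simp
  finally have ineq: "card S * ?u \<le> card ?M * ?d" by auto
  have "(\<Sum>X\<in>?L0. card {Y \<in> ?L1. X \<subseteq> Y}) = (\<Sum>X\<in>?L0. ?u)"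
    by (rule sum.cong[OF refl], rule card_up') auto
  then have "card ?L0 * ?u = (\<Sum>X\<in>?L0. card {Y \<in> ?L1. X \<subseteq> Y})" by simp
  also have "\<dots> = (\<Sum>Y\<in>?L1. card {X\<in>?L0. X \<subseteq> Y})" by (rule sum_card_swap) auto
  also have "\<dots> = (\<Sum>Y\<in>?L1. ?d)"
  proof (rule sum.cong[OF refl])
    fix Y assume Y: "Y \<in> ?L1"
    have "{X\<in>?L0. X \<subseteq> Y} = Sub Y i" by (auto simp: Sub_def)
    then show "card {X\<in>?L0. X \<subseteq> Y} = ?d" using card_down(1)[OF Y] by simp
  qed
  finally have eq: "card ?L0 * ?u = card ?L1 * ?d" by simp
  obtain Y0 where Y0: "Y0 \<in> ?L1" using count_pos[of "i+1", where 'a='a and 'n='n] i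
    by (metis card.empty ex_in_conv less_irrefl)
  have dpos: "?d > 0" using card_down(2)[OF Y0] .
  have "(card S * card ?L1) * ?d = card S * (card ?L0 * ?u)" using eq by (simp add: ac_simps)
  also have "\<dots> = (card S * ?u) * card ?L0" by (simp add: ac_simps)
  also have "\<dots> \<le> (card ?M * ?d) * card ?L0" using ineq by (rule mult_right_mono) simp
  also have "\<dots> = (card ?M * card ?L0) * ?d" by (simp add: ac_simps)
  finally show ?thesis using dpos by simp
qed

lemma dist_subset:
  fixes X Y :: "('a::field^'n) set"
  assumes "vec.subspace X" "vec.subspace Y" "X \<subseteq> Y"
  shows "subspace_dist X Y = vec.dim Y - vec.dim X"
proof -
  have "X \<union> Y = Y" "X \<inter> Y = X" using assms by auto
  then show ?thesis unfolding subspace_dist_def using assms by simp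
qed

lemma dist_same_parity:
  fixes X Y :: "('a::{field,finite}^'n) set"
  assumes X: "vec.subspace X" and Y: "vec.subspace Y" and ne: "X \<noteq> Y"
    and par: "vec.dim X mod 2 = vec.dim Y mod 2"
  shows "2 \<le> subspace_dist X Y"
proof (rule ccontr)
  assume "\<not> 2 \<le> subspace_dist X Y"
  then have d: "vec.dim (vec.span (X \<union> Y)) \<le> vec.dim (X \<inter> Y) + 1"
    unfolding subspace_dist_def by simp
  let ?Z = "vec.span (X \<union> Y)" and ?I = "X \<inter> Y"
  have sI: "vec.subspace ?I" using X Y by (rule vec.subspace_inter)
  have sZ: "vec.subspace ?Z" by simp
  have XZ: "X \<subseteq> ?Z" "Y \<subseteq> ?Z" by (auto intro: vec.span_base)
  have dIX: "vec.dim ?I \<le> vec.dim X" "vec.dim ?I \<le> vec.dim Y" by (auto intro: vec.dim_subset)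
  have dXZ: "vec.dim X \<le> vec.dim ?Z" "vec.dim Y \<le> vec.dim ?Z" using XZ by (auto intro: vec.dim_subset)
  have cmp: "X \<subseteq> Y \<or> Y \<subseteq> X"
  proof (cases "vec.dim X = vec.dim ?I")
    case True
    then have "?I = X" using subspace_eq_dim[OF sI X] by auto
    then show ?thesis by blast
  next
    case False
    then have "vec.dim ?Z \<le> vec.dim X" using d dIX dXZ by simp
    then have "X = ?Z" using subspace_eq_dim[OF X sZ XZ(1)] by simp
    then show ?thesis using XZ by blast
  qed
  then have "vec.dim X = vec.dim Y"
  proof
    assume s: "X \<subseteq> Y"
    then have "subspace_dist X Y = vec.dim Y - vec.dim X" using dist_subset X Y by blast
    moreover have "vec.dim X \<le> vec.dim Y" using s by (rule vec.dim_subset)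
    ultimately show ?thesis using par \<open>\<not> 2 \<le> subspace_dist X Y\<close> by presburger
  next
    assume s: "Y \<subseteq> X"
    then have "subspace_dist Y X = vec.dim X - vec.dim Y" using dist_subset X Y by blast
    moreover have "subspace_dist Y X = subspace_dist X Y" unfolding subspace_dist_def
      by (simp add: Un_commute Int_commute)
    moreover have "vec.dim Y \<le> vec.dim X" using s by (rule vec.dim_subset)
    ultimately show ?thesis using par \<open>\<not> 2 \<le> subspace_dist X Y\<close> by presburger
  qed
  then have "X = Y" using cmp subspace_eq_dim X Y by (metis order_refl)
  then show False using ne by simp
qed

lemma code_ineq:
  fixes C :: "('a::{field,finite}^'n) set set"
  assumes C: "is_code 2 C" and i: "i + 1 \<le> CARD('n)"
  shows "card (C \<inter> Sub UNIV i) * card (Sub (UNIV::('a^'n) set) (i+1))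
       + card (C \<inter> Sub UNIV (i+1)) * card (Sub (UNIV::('a^'n) set) i)
     \<le> card (Sub (UNIV::('a^'n) set) i) * card (Sub (UNIV::('a^'n) set) (i+1))"
proof -
  let ?S = "C \<inter> Sub UNIV i" and ?T = "C \<inter> Sub UNIV (i+1)"
  let ?M = "{Y \<in> Sub UNIV (i+1). \<exists>X\<in>?S. X \<subseteq> Y}"
  have l: "card ?S * card (Sub (UNIV::('a^'n) set) (i+1)) \<le> card ?M * card (Sub (UNIV::('a^'n) set) i)"
    using level_ineq[of ?S i] i by auto
  have disj: "?M \<inter> ?T = {}"
  proof (rule ccontr)
    assume "?M \<inter> ?T \<noteq> {}"
    then obtain X Y where XY: "X \<in> C" "Y \<in> C" "X \<in> Sub UNIV i" "Y \<in> Sub UNIV (i+1)" "X \<subseteq> Y"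
      by blast
    have "subspace_dist X Y = 1" using XY dist_subset[of X Y] by (auto simp: Sub_def)
    moreover have "X \<noteq> Y" using XY by (auto simp: Sub_def)
    ultimately show False using C XY unfolding is_code_def by fastforce
  qed
  have "card (?M \<union> ?T) \<le> card (Sub (UNIV::('a^'n) set) (i+1))" by (intro card_mono) auto
  then have MT: "card ?M + card ?T \<le> card (Sub (UNIV::('a^'n) set) (i+1))"
    using disj by (simp add: card_Un_disjoint)
  have "card ?M * card (Sub (UNIV::('a^'n) set) i) + card ?T * card (Sub (UNIV::('a^'n) set) i)
     \<le> card (Sub (UNIV::('a^'n) set) (i+1)) * card (Sub (UNIV::('a^'n) set) i)"
    using mult_le_mono1[OF MT, of "card (Sub (UNIV::('a^'n) set) i)"] by (simp add: add_mult_distrib)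
  then show ?thesis using l by (simp add: ac_simps)
qed

lemma subspaces_dim: "X \<in> subspaces \<Longrightarrow> vec.dim X \<le> CARD('n)" for X :: "('a::field^'n) set"
  by (rule dim_subset_UNIV_cart_gen)

lemma card_by_levels:
  fixes C :: "('a::{field,finite}^'n) set set"
  assumes "C \<subseteq> subspaces"
  shows "card C = (\<Sum>i\<le>CARD('n). card (C \<inter> Sub UNIV i))"
proof -
  have "card C = (\<Sum>i\<in>{..CARD('n)}. card {X\<in>C. vec.dim X = i})"
    by (rule card_fibers) (use dim_subset_UNIV_cart_gen in auto)
  also have "\<dots> = (\<Sum>i\<le>CARD('n). card (C \<inter> Sub UNIV i))"
    by (rule sum.cong[OF refl], rule arg_cong[where f=card]) (use assms in \<open>auto simp: Sub_def subspaces_def\<close>)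
  finally show ?thesis .
qed

lemma card_class:
  "card {X :: ('a::{field,finite}^'n) set. X \<in> subspaces \<and> P (vec.dim X)}
     = (\<Sum>i\<in>{i. i \<le> CARD('n) \<and> P i}. card (Sub (UNIV::('a^'n) set) i))"
proof -
  let ?K = "{X :: ('a^'n) set. X \<in> subspaces \<and> P (vec.dim X)}"
  have "card ?K = (\<Sum>i\<le>CARD('n). card (?K \<inter> Sub UNIV i))"
    by (rule card_by_levels) auto
  also have "\<dots> = (\<Sum>i\<le>CARD('n). if P i then card (Sub (UNIV::('a^'n) set) i) else 0)"
  proof (rule sum.cong[OF refl])
    fix i
    show "card (?K \<inter> Sub UNIV i) = (if P i then card (Sub (UNIV::('a^'n) set) i) else 0)"
    proof (cases "P i")
      case True
      then have "?K \<inter> Sub UNIV i = Sub UNIV i" by (auto simp: Sub_def subspaces_def)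
      then show ?thesis using True by simp
    next
      case False
      then have "?K \<inter> Sub UNIV i = {}" by (auto simp: Sub_def subspaces_def)
      then show ?thesis using False by simp
    qed
  qed
  also have "\<dots> = (\<Sum>i\<in>{i. i \<le> CARD('n) \<and> P i}. card (Sub (UNIV::('a^'n) set) i))"
    by (simp add: sum.If_cases Collect_conj_eq atMost_def Int_commute)
  finally show ?thesis .
qed

fun yy :: "(nat \<Rightarrow> real) \<Rightarrow> nat \<Rightarrow> real" where
  "yy N 0 = N 0"
| "yy N (Suc j) = N (Suc j) - yy N j"

fun AA :: "(nat \<Rightarrow> real) \<Rightarrow> nat \<Rightarrow> real" where
  "AA N 0 = 0"
| "AA N (Suc j) = AA N j + yy N j"

lemma ident:
  "(\<Sum>i\<le>j. N i * x i) + (\<Sum>i<j. yy N i * (1 - x i - x (Suc i))) = AA N j + yy N j * x j"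
  by (induction j) (simp_all add: algebra_simps)

lemma yy_cong: "(\<forall>i\<le>j. N i = M i) \<Longrightarrow> yy N j = yy M j \<and> AA N j = AA M j"
  by (induction j) auto

lemma yy_pos:
  assumes "N 0 > 0" "\<And>j. 1 \<le> j \<Longrightarrow> j \<le> m \<Longrightarrow> N (j-1) < N j"
  shows "j \<le> m \<Longrightarrow> 0 < yy N j \<and> yy N j \<le> N j"
proof (induction j)
  case 0 then show ?case using assms by simp
next
  case (Suc j)
  then have "0 < yy N j \<and> yy N j \<le> N j" by simp
  moreover have "N j < N (Suc j)" using assms(2)[of "Suc j"] Suc.prems by simp
  ultimately show ?case by simp
qed

lemma sum_rev_upper:
  fixes g :: "nat \<Rightarrow> real"
  assumes "m \<le> v"
  shows "(\<Sum>i\<le>m. g (v - i)) = (\<Sum>i\<in>{v-m..v}. g i)"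
  by (rule sum.reindex_bij_witness[where i="\<lambda>i. v - i" and j="\<lambda>i. v - i"]) (use assms in auto)

lemma split_sum:
  fixes g :: "nat \<Rightarrow> real"
  assumes "k \<le> v"
  shows "(\<Sum>i\<le>v. g i) = (\<Sum>i\<le>k. g i) + (\<Sum>i\<in>{Suc k..v}. g i)"
proof -
  have "{..v} = {..k} \<union> {Suc k..v}" using assms by auto
  then show ?thesis by (simp add: sum.union_disjoint)
qed

lemma odd_ident:
  fixes N x :: "nat \<Rightarrow> real"
  assumes v: "v = 2*k+1" and sym: "\<And>i. i \<le> v \<Longrightarrow> N (v - i) = N i"
  defines "s \<equiv> \<lambda>i. 1 - x i - x (Suc i)"
  shows "(\<Sum>i\<le>v. N i * x i) + (\<Sum>i<k. yy N i * s i) + (\<Sum>i<k. yy N i * s (v - 1 - i))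
          + yy N k * s k = 2 * AA N k + yy N k"
proof -
  let ?N' = "\<lambda>i. N (v - i)" and ?x' = "\<lambda>i. x (v - i)"
  have lo: "(\<Sum>i\<le>k. N i * x i) + (\<Sum>i<k. yy N i * s i) = AA N k + yy N k * x k"
    using ident[of N x k] by (simp add: s_def)
  have up0: "(\<Sum>i\<le>k. ?N' i * ?x' i) + (\<Sum>i<k. yy ?N' i * (1 - ?x' i - ?x' (Suc i)))
      = AA ?N' k + yy ?N' k * ?x' k" by (rule ident)
  have c: "yy ?N' j = yy N j \<and> AA ?N' j = AA N j" if "j \<le> k" for j
    using that by (intro yy_cong allI impI sym) (use v in auto)
  have c2: "(\<Sum>i<k. yy ?N' i * (1 - ?x' i - ?x' (Suc i))) = (\<Sum>i<k. yy N i * s (v - 1 - i))"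
  proof (rule sum.cong[OF refl])
    fix i assume "i \<in> {..<k}"
    then have "i < k" by simp
    then have "v - Suc i = v - 1 - i" "Suc (v - 1 - i) = v - i" using v by auto
    then show "yy ?N' i * (1 - ?x' i - ?x' (Suc i)) = yy N i * s (v - 1 - i)"
      using c[of i] \<open>i<k\<close> by (simp add: s_def)
  qed
  have c3: "(\<Sum>i\<le>k. ?N' i * ?x' i) = (\<Sum>i\<in>{Suc k..v}. N i * x i)"
    using sum_rev_upper[of k v "\<lambda>i. N i * x i"] v by (simp add: Suc_diff_le)
  have xk: "?x' k = x (Suc k)" using v by simp
  have up: "(\<Sum>i\<in>{Suc k..v}. N i * x i) + (\<Sum>i<k. yy N i * s (v - 1 - i)) = AA N k + yy N k * x (Suc k)"
    using up0 c[of k] c2 c3 xk by simp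
  have sp: "(\<Sum>i\<le>v. N i * x i) = (\<Sum>i\<le>k. N i * x i) + (\<Sum>i\<in>{Suc k..v}. N i * x i)"
    by (rule split_sum) (simp add: v)
  show ?thesis using lo up sp by (simp add: s_def algebra_simps)
qed

lemma even_ident:
  fixes N x :: "nat \<Rightarrow> real"
  assumes v: "v = 2*k" and k: "k \<ge> 1" and sym: "\<And>i. i \<le> v \<Longrightarrow> N (v - i) = N i"
  defines "s \<equiv> \<lambda>i. 1 - x i - x (Suc i)"
  shows "(\<Sum>i\<le>v. N i * x i) + (\<Sum>i<k. yy N i * s i) + (\<Sum>i<k-1. yy N i * s (v - 1 - i))
          + yy N (k-1) * s k + (yy N k - yy N (k-1)) * (1 - x k) = AA N k + AA N (k-1) + yy N k"
proof -
  let ?N' = "\<lambda>i. N (v - i)" and ?x' = "\<lambda>i. x (v - i)"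
  have lo: "(\<Sum>i\<le>k. N i * x i) + (\<Sum>i<k. yy N i * s i) = AA N k + yy N k * x k"
    using ident[of N x k] by (simp add: s_def)
  have up0: "(\<Sum>i\<le>k-1. ?N' i * ?x' i) + (\<Sum>i<k-1. yy ?N' i * (1 - ?x' i - ?x' (Suc i)))
      = AA ?N' (k-1) + yy ?N' (k-1) * ?x' (k-1)" by (rule ident)
  have c: "yy ?N' j = yy N j \<and> AA ?N' j = AA N j" if "j \<le> k" for j
    using that by (intro yy_cong allI impI sym) (use v in auto)
  have c2: "(\<Sum>i<k-1. yy ?N' i * (1 - ?x' i - ?x' (Suc i))) = (\<Sum>i<k-1. yy N i * s (v - 1 - i))"
  proof (rule sum.cong[OF refl])
    fix i assume "i \<in> {..<k-1}"
    then have "i < k" by simp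
    then have "v - Suc i = v - 1 - i" "Suc (v - 1 - i) = v - i" using v by auto
    then show "yy ?N' i * (1 - ?x' i - ?x' (Suc i)) = yy N i * s (v - 1 - i)"
      using c[of i] \<open>i<k\<close> by (simp add: s_def)
  qed
  have c3: "(\<Sum>i\<le>k-1. ?N' i * ?x' i) = (\<Sum>i\<in>{Suc k..v}. N i * x i)"
  proof -
    have "v - (k - 1) = Suc k" using v k by simp
    then show ?thesis using sum_rev_upper[of "k-1" v "\<lambda>i. N i * x i"] v by simp
  qed
  have xk: "?x' (k-1) = x (Suc k)" using v k by (simp add: Suc_diff_le)
  have up: "(\<Sum>i\<in>{Suc k..v}. N i * x i) + (\<Sum>i<k-1. yy N i * s (v - 1 - i))
          = AA N (k-1) + yy N (k-1) * x (Suc k)"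
    using up0 c[of "k-1"] c2 c3 xk by simp
  have sp: "(\<Sum>i\<le>v. N i * x i) = (\<Sum>i\<le>k. N i * x i) + (\<Sum>i\<in>{Suc k..v}. N i * x i)"
    by (rule split_sum) (simp add: v)
  show ?thesis using lo up sp by (simp add: s_def algebra_simps)
qed

lemma sum_pos_zero:
  fixes f g :: "nat \<Rightarrow> real"
  assumes A: "finite A" and nn: "\<forall>i\<in>A. 0 \<le> f i * g i" and z: "(\<Sum>i\<in>A. f i * g i) = 0"
    and j: "j \<in> A" and fj: "0 < f j"
  shows "g j = 0"
proof -
  have "(\<Sum>i\<in>A. f i * g i) = 0 \<longleftrightarrow> (\<forall>i\<in>A. f i * g i = 0)"
    by (rule sum_nonneg_eq_0_iff[OF A]) (use nn in blast)
  then have "f j * g j = 0" using z j by blast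
  then show ?thesis using fj by simp
qed

lemma odd_main:
  fixes N x :: "nat \<Rightarrow> real"
  assumes v: "v = 2*k+1" and sym: "\<And>i. i \<le> v \<Longrightarrow> N (v - i) = N i"
    and N0: "N 0 > 0" and incr: "\<And>j. 1 \<le> j \<Longrightarrow> j \<le> k \<Longrightarrow> N (j-1) < N j"
    and adj: "\<And>i. i < v \<Longrightarrow> x i + x (Suc i) \<le> 1"
  shows "(\<Sum>i\<le>v. N i * x i) \<le> 2 * AA N k + yy N k"
    and "(\<Sum>i\<le>v. N i * x i) = 2 * AA N k + yy N k \<Longrightarrow> (\<forall>i<v. x i + x (Suc i) = 1)"
    and "(\<forall>i<v. x i + x (Suc i) = 1) \<Longrightarrow> (\<Sum>i\<le>v. N i * x i) = 2 * AA N k + yy N k"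
proof -
  let ?s = "\<lambda>i. 1 - x i - x (Suc i)"
  have E: "(\<Sum>i\<le>v. N i * x i) + (\<Sum>i<k. yy N i * ?s i) + (\<Sum>i<k. yy N i * ?s (v - 1 - i))
          + yy N k * ?s k = 2 * AA N k + yy N k"
    using odd_ident[of v k N x, OF v sym] by simp
  have yp: "i \<le> k \<Longrightarrow> 0 < yy N i" for i using yy_pos[of N k i] N0 incr by auto
  have sp: "i < v \<Longrightarrow> 0 \<le> ?s i" for i using adj[of i] by simp
  have t1: "\<forall>i\<in>{..<k}. 0 \<le> yy N i * ?s i"
  proof
    fix i assume "i \<in> {..<k}"
    then have "0 < yy N i" "0 \<le> ?s i" using yp sp v by auto
    then show "0 \<le> yy N i * ?s i" by simp
  qed
  have t2: "\<forall>i\<in>{..<k}. 0 \<le> yy N i * ?s (v - 1 - i)"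
  proof
    fix i assume "i \<in> {..<k}"
    then have "0 < yy N i" "0 \<le> ?s (v - 1 - i)" using yp sp[of "v - 1 - i"] v by auto
    then show "0 \<le> yy N i * ?s (v - 1 - i)" by simp
  qed
  have t3: "0 \<le> yy N k * ?s k"
  proof -
    have "0 < yy N k" "0 \<le> ?s k" using yp sp v by auto
    then show ?thesis by simp
  qed
  have T1: "0 \<le> (\<Sum>i<k. yy N i * ?s i)" by (rule sum_nonneg) (use t1 in blast)
  have T2: "0 \<le> (\<Sum>i<k. yy N i * ?s (v - 1 - i))" by (rule sum_nonneg) (use t2 in blast)
  show "(\<Sum>i\<le>v. N i * x i) \<le> 2 * AA N k + yy N k" using E T1 T2 t3 by linarith
  show "(\<forall>i<v. x i + x (Suc i) = 1) \<Longrightarrow> (\<Sum>i\<le>v. N i * x i) = 2 * AA N k + yy N k"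
  proof -
    assume h: "\<forall>i<v. x i + x (Suc i) = 1"
    have h0: "?s i = 0" if "i < v" for i
    proof -
      have "x i + x (Suc i) = 1" using h that by blast
      then show ?thesis by linarith
    qed
    have "(\<Sum>i<k. yy N i * ?s i) = 0" using h0 v by (intro sum.neutral) auto
    moreover have "(\<Sum>i<k. yy N i * ?s (v - 1 - i)) = 0" using h0 v by (intro sum.neutral) auto
    moreover have "yy N k * ?s k = 0" using h0 v by auto
    ultimately show ?thesis using E by linarith
  qed
  assume eq: "(\<Sum>i\<le>v. N i * x i) = 2 * AA N k + yy N k"
  then have z1: "(\<Sum>i<k. yy N i * ?s i) = 0" and z2: "(\<Sum>i<k. yy N i * ?s (v - 1 - i)) = 0"
    and z3: "yy N k * ?s k = 0"
    using E T1 T2 t3 by linarith+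
  have a1: "i < k \<Longrightarrow> ?s i = 0" for i
    by (rule sum_pos_zero[OF _ t1 z1, of i]) (use yp[of i] in auto)
  have a2: "i < k \<Longrightarrow> ?s (v - 1 - i) = 0" for i
    by (rule sum_pos_zero[OF _ t2 z2, of i]) (use yp[of i] in auto)
  have a3: "?s k = 0" using z3 yp[of k] by simp
  show "\<forall>i<v. x i + x (Suc i) = 1"
  proof (intro allI impI)
    fix i assume "i < v"
    have "?s i = 0"
    proof (cases "i < k")
      case True then show ?thesis by (rule a1)
    next
      case False
      show ?thesis
      proof (cases "i = k")
        case True then show ?thesis using a3 by simp
      next
        case False
        then have "v - 1 - (v - 1 - i) = i" "v - 1 - i < k" using \<open>\<not> i < k\<close> \<open>i < v\<close> v by auto
        then show ?thesis using a2[of "v - 1 - i"] by simp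
      qed
    qed
    then show "x i + x (Suc i) = 1" by simp
  qed
qed

lemma even_main:
  fixes N x :: "nat \<Rightarrow> real"
  assumes v: "v = 2*k" and k: "k \<ge> 1" and sym: "\<And>i. i \<le> v \<Longrightarrow> N (v - i) = N i"
    and N0: "N 0 > 0" and incr: "\<And>j. 1 \<le> j \<Longrightarrow> j \<le> k \<Longrightarrow> N (j-1) < N j"
    and mid: "2 * N (k-1) < N k"
    and adj: "\<And>i. i < v \<Longrightarrow> x i + x (Suc i) \<le> 1" and x1: "x k \<le> 1"
  shows "(\<Sum>i\<le>v. N i * x i) \<le> AA N k + AA N (k-1) + yy N k"
    and "(\<Sum>i\<le>v. N i * x i) = AA N k + AA N (k-1) + yy N k \<Longrightarrow> (\<forall>i<v. x i + x (Suc i) = 1) \<and> x k = 1"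
    and "(\<forall>i<v. x i + x (Suc i) = 1) \<Longrightarrow> x k = 1 \<Longrightarrow> (\<Sum>i\<le>v. N i * x i) = AA N k + AA N (k-1) + yy N k"
proof -
  let ?s = "\<lambda>i. 1 - x i - x (Suc i)"
  let ?B = "AA N k + AA N (k-1) + yy N k"
  have E: "(\<Sum>i\<le>v. N i * x i) + (\<Sum>i<k. yy N i * ?s i) + (\<Sum>i<k-1. yy N i * ?s (v - 1 - i))
          + yy N (k-1) * ?s k + (yy N k - yy N (k-1)) * (1 - x k) = ?B"
    using even_ident[of v k N x, OF v k sym] by simp
  have yp: "i \<le> k \<Longrightarrow> 0 < yy N i \<and> yy N i \<le> N i" for i using yy_pos[of N k i] N0 incr by auto
  have ykk: "yy N k = N k - yy N (k-1)" using k by (cases k) auto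
  have dpos: "0 < yy N k - yy N (k-1)" using ykk yp[of "k-1"] mid by simp
  have sp: "i < v \<Longrightarrow> 0 \<le> ?s i" for i using adj[of i] by simp
  have t1: "\<forall>i\<in>{..<k}. 0 \<le> yy N i * ?s i"
  proof
    fix i assume "i \<in> {..<k}"
    then have "0 < yy N i" "0 \<le> ?s i" using yp[of i] sp[of i] v by auto
    then show "0 \<le> yy N i * ?s i" by simp
  qed
  have t2: "\<forall>i\<in>{..<k-1}. 0 \<le> yy N i * ?s (v - 1 - i)"
  proof
    fix i assume "i \<in> {..<k-1}"
    then have "0 < yy N i" "0 \<le> ?s (v - 1 - i)" using yp[of i] sp[of "v - 1 - i"] v by auto
    then show "0 \<le> yy N i * ?s (v - 1 - i)" by simp
  qed
  have t3: "0 \<le> yy N (k-1) * ?s k"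
  proof -
    have "0 < yy N (k-1)" "0 \<le> ?s k" using yp[of "k-1"] sp[of k] v k by auto
    then show ?thesis by simp
  qed
  have t4: "0 \<le> (yy N k - yy N (k-1)) * (1 - x k)" using dpos x1 by simp
  have T1: "0 \<le> (\<Sum>i<k. yy N i * ?s i)" by (rule sum_nonneg) (use t1 in blast)
  have T2: "0 \<le> (\<Sum>i<k-1. yy N i * ?s (v - 1 - i))" by (rule sum_nonneg) (use t2 in blast)
  show "(\<Sum>i\<le>v. N i * x i) \<le> ?B" using E T1 T2 t3 t4 by linarith
  show "(\<forall>i<v. x i + x (Suc i) = 1) \<Longrightarrow> x k = 1 \<Longrightarrow> (\<Sum>i\<le>v. N i * x i) = ?B"
  proof -
    assume h: "\<forall>i<v. x i + x (Suc i) = 1" and xk: "x k = 1"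
    have h0: "?s i = 0" if "i < v" for i
    proof -
      have "x i + x (Suc i) = 1" using h that by blast
      then show ?thesis by linarith
    qed
    have "(\<Sum>i<k. yy N i * ?s i) = 0" using h0 v by (intro sum.neutral) auto
    moreover have "(\<Sum>i<k-1. yy N i * ?s (v - 1 - i)) = 0" using h0 v by (intro sum.neutral) auto
    moreover have "yy N (k-1) * ?s k = 0" using h0 v k by auto
    moreover have "(yy N k - yy N (k-1)) * (1 - x k) = 0" using xk by simp
    ultimately show ?thesis using E by linarith
  qed
  assume eq: "(\<Sum>i\<le>v. N i * x i) = ?B"
  then have z1: "(\<Sum>i<k. yy N i * ?s i) = 0" and z2: "(\<Sum>i<k-1. yy N i * ?s (v - 1 - i)) = 0"
    and z3: "yy N (k-1) * ?s k = 0" and z4: "(yy N k - yy N (k-1)) * (1 - x k) = 0"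
    using E T1 T2 t3 t4 by linarith+
  have a1: "i < k \<Longrightarrow> ?s i = 0" for i
    by (rule sum_pos_zero[OF _ t1 z1, of i]) (use yp[of i] in auto)
  have a2: "i < k - 1 \<Longrightarrow> ?s (v - 1 - i) = 0" for i
    by (rule sum_pos_zero[OF _ t2 z2, of i]) (use yp[of i] in auto)
  have a3: "?s k = 0" using z3 yp[of "k-1"] by simp
  have a4: "x k = 1" using z4 dpos by simp
  have "\<forall>i<v. x i + x (Suc i) = 1"
  proof (intro allI impI)
    fix i assume "i < v"
    have "?s i = 0"
    proof (cases "i < k")
      case True then show ?thesis by (rule a1)
    next
      case False
      show ?thesis
      proof (cases "i = k")
        case True then show ?thesis using a3 by simp
      next
        case False
        then have "v - 1 - (v - 1 - i) = i" "v - 1 - i < k - 1" using \<open>\<not> i < k\<close> \<open>i < v\<close> v by auto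
        then show ?thesis using a2[of "v - 1 - i"] by simp
      qed
    qed
    then show "x i + x (Suc i) = 1" by simp
  qed
  then show "(\<forall>i<v. x i + x (Suc i) = 1) \<and> x k = 1" using a4 by simp
qed

lemma perp_bij_level:
  assumes "i \<le> CARD('n)"
  shows "bij_betw perp (Sub (UNIV::('a::{field,finite}^'n) set) i) (Sub UNIV (CARD('n) - i))"
proof (rule bij_betw_byWitness[where f'=perp])
  show "\<forall>a\<in>Sub (UNIV::('a^'n) set) i. perp (perp a) = a" by (auto simp: Sub_def perp_perp)
  show "\<forall>a'\<in>Sub (UNIV::('a^'n) set) (CARD('n) - i). perp (perp a') = a'" by (auto simp: Sub_def perp_perp)
  show "perp ` Sub (UNIV::('a^'n) set) i \<subseteq> Sub UNIV (CARD('n) - i)"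
    by (auto simp: Sub_def subspace_perp dim_perp)
  show "perp ` Sub (UNIV::('a^'n) set) (CARD('n) - i) \<subseteq> Sub UNIV i"
    using assms by (auto simp: Sub_def subspace_perp dim_perp)
qed

lemma Nsym:
  assumes "i \<le> CARD('n)"
  shows "card (Sub (UNIV::('a::{field,finite}^'n) set) (CARD('n) - i)) = card (Sub (UNIV::('a^'n) set) i)"
  using bij_betw_same_card[OF perp_bij_level[OF assms]] by (rule HOL.sym)

lemma N0_one: "Sub (UNIV::('a::field^'n) set) 0 = {{0}}"
proof -
  have "X = {0}" if "vec.subspace X" "vec.dim X = 0" for X :: "('a^'n) set"
    using that vec.subspace_0[of X] by auto
  then show ?thesis by (auto simp: Sub_def)
qed

lemma parity_code:
  assumes "K \<subseteq> subspaces" "\<And>X Y. X \<in> K \<Longrightarrow> Y \<in> K \<Longrightarrow> vec.dim X mod 2 = vec.dim Y mod 2"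
  shows "is_code 2 (K :: ('a::{field,finite}^'n) set set)"
  unfolding is_code_def
proof (intro conjI ballI impI)
  show "K \<subseteq> subspaces" using assms(1) .
  fix X Y assume XY: "X \<in> K" "Y \<in> K" "X \<noteq> Y"
  have "vec.subspace X" "vec.subspace Y" using XY assms(1) by (auto simp: subspaces_def)
  then show "2 \<le> subspace_dist X Y" using dist_same_parity XY assms(2) by blast
qed

lemma code_x:
  fixes C :: "('a::{field,finite}^'n) set set"
  assumes C: "is_code 2 C"
  defines "x \<equiv> \<lambda>i. real (card (C \<inter> Sub UNIV i)) / real (card (Sub (UNIV::('a^'n) set) i))"
  shows "\<And>i. i < CARD('n) \<Longrightarrow> x i + x (Suc i) \<le> 1" and "\<And>i. x i \<le> 1"
    and "(\<Sum>i\<le>CARD('n). real (card (Sub (UNIV::('a^'n) set) i)) * x i) = real (card C)"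
proof -
  fix i assume i: "i < CARD('n)"
  let ?a = "real (card (C \<inter> Sub UNIV i))" and ?b = "real (card (C \<inter> Sub UNIV (i+1)))"
  let ?A = "real (card (Sub (UNIV::('a^'n) set) i))" and ?B = "real (card (Sub (UNIV::('a^'n) set) (i+1)))"
  have A: "?A > 0" using count_pos[of i, where 'a='a and 'n='n] i by simp
  have B: "?B > 0" using count_pos[of "i+1", where 'a='a and 'n='n] i by simp
  have "card (C \<inter> Sub UNIV i) * card (Sub (UNIV::('a^'n) set) (i+1))
       + card (C \<inter> Sub UNIV (i+1)) * card (Sub (UNIV::('a^'n) set) i)
     \<le> card (Sub (UNIV::('a^'n) set) i) * card (Sub (UNIV::('a^'n) set) (i+1))"
    using code_ineq[OF C, of i] i by simp
  then have "?a * ?B + ?b * ?A \<le> ?A * ?B" by (simp only: of_nat_mult[symmetric] of_nat_add[symmetric] of_nat_le_iff)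
  moreover have AB: "0 < ?A * ?B" using A B by (rule mult_pos_pos)
  ultimately have "(?a * ?B + ?b * ?A) / (?A * ?B) \<le> 1" by (simp only: divide_le_eq_1_pos)
  moreover have "?a / ?A + ?b / ?B = (?a * ?B + ?b * ?A) / (?A * ?B)"
    by (rule add_frac_eq) (use A B in auto)
  ultimately show "x i + x (Suc i) \<le> 1" by (simp only: x_def Suc_eq_plus1)
next
  fix i
  have "card (C \<inter> Sub UNIV i) \<le> card (Sub (UNIV::('a^'n) set) i)" by (intro card_mono) auto
  then show "x i \<le> 1" unfolding x_def by (auto simp: divide_le_eq_1 card_gt_0_iff)
next
  have Cs: "C \<subseteq> subspaces" using C by (simp add: is_code_def)
  have "(\<Sum>i\<le>CARD('n). real (card (Sub (UNIV::('a^'n) set) i)) * x i)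
      = (\<Sum>i\<le>CARD('n). real (card (C \<inter> Sub UNIV i)))"
  proof (rule sum.cong[OF refl])
    fix i assume "i \<in> {..CARD('n)}"
    then have "real (card (Sub (UNIV::('a^'n) set) i)) > 0" using count_pos[of i, where 'a='a and 'n='n] by simp
    then show "real (card (Sub (UNIV::('a^'n) set) i)) * x i = real (card (C \<inter> Sub UNIV i))"
      by (simp add: x_def)
  qed
  also have "\<dots> = real (card C)" using card_by_levels[OF Cs] by simp
  finally show "(\<Sum>i\<le>CARD('n). real (card (Sub (UNIV::('a^'n) set) i)) * x i) = real (card C)" .
qed

lemma class_x:
  assumes "i \<le> CARD('n)"
  shows "real (card ({X \<in> (subspaces :: ('a::{field,finite}^'n) set set). P (vec.dim X)} \<inter> Sub UNIV i)) / real (card (Sub (UNIV::('a::{field,finite}^'n) set) i))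
       = (if P i then 1 else 0)"
proof -
  have pos: "card (Sub (UNIV::('a^'n) set) i) > 0" using count_pos[of i, where 'a='a and 'n='n] assms by simp
  show ?thesis
  proof (cases "P i")
    case True
    then have "{X \<in> (subspaces :: ('a^'n) set set). P (vec.dim X)} \<inter> Sub UNIV i = Sub (UNIV::('a^'n) set) i"
      by (auto simp: Sub_def subspaces_def)
    then have E: "{X \<in> (subspaces :: ('a^'n) set set). P (vec.dim X)} \<inter> Sub UNIV i = Sub (UNIV::('a^'n) set) i" .
    have "real (card ({X \<in> (subspaces :: ('a^'n) set set). P (vec.dim X)} \<inter> Sub UNIV i)) / real (card (Sub (UNIV::('a^'n) set) i))
        = real (card (Sub (UNIV::('a^'n) set) i)) / real (card (Sub (UNIV::('a^'n) set) i))" by (simp only: E)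
    then show ?thesis using True pos E by (simp add: card_gt_0_iff)
  next
    case False
    then have "{X \<in> (subspaces :: ('a^'n) set set). P (vec.dim X)} \<inter> Sub UNIV i = {}"
      by (auto simp: Sub_def subspaces_def)
    then show ?thesis using False by simp
  qed
qed

lemma x_reconstruct:
  fixes C :: "('a::{field,finite}^'n) set set"
  assumes Cs: "C \<subseteq> subspaces"
    and x: "\<And>i. i \<le> CARD('n) \<Longrightarrow> real (card (C \<inter> Sub UNIV i)) / real (card (Sub (UNIV::('a^'n) set) i))
                 = (if P i then 1 else 0)"
  shows "C = {X \<in> subspaces. P (vec.dim X)}"
proof -
  have lev: "C \<inter> Sub UNIV i = (if P i then Sub UNIV i else {})" if i: "i \<le> CARD('n)" for i
  proof -
    have pos: "card (Sub (UNIV::('a^'n) set) i) > 0" using count_pos[of i, where 'a='a and 'n='n] i by simp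
    show ?thesis
    proof (cases "P i")
      case True
      then have "card (C \<inter> Sub UNIV i) = card (Sub (UNIV::('a^'n) set) i)" using x[OF i] pos by simp
      then have "C \<inter> Sub UNIV i = Sub UNIV i" by (intro card_subset_eq) auto
      then show ?thesis using True by simp
    next
      case False
      then have "real (card (C \<inter> Sub UNIV i)) / real (card (Sub (UNIV::('a^'n) set) i)) = 0"
        using x[OF i] by simp
      then have "C \<inter> Sub UNIV i = {} \<or> Sub (UNIV::('a^'n) set) i = {}" by (simp add: divide_eq_0_iff)
      moreover have "Sub (UNIV::('a^'n) set) i \<noteq> {}" using pos by auto
      ultimately have "C \<inter> Sub UNIV i = {}" by blast
      then show ?thesis using False by simp
    qed
  qed
  show ?thesis
  proof (intro set_eqI iffI)
    fix X assume X: "X \<in> C"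
    let ?i = "vec.dim X"
    have "X \<in> C \<inter> Sub UNIV ?i" using X Cs by (auto simp: Sub_def subspaces_def)
    then have "P ?i" using lev[of ?i] dim_subset_UNIV_cart_gen[of X] by (auto split: if_splits)
    then show "X \<in> {X \<in> subspaces. P (vec.dim X)}" using X Cs by auto
  next
    fix X :: "('a^'n) set" assume X: "X \<in> {X \<in> subspaces. P (vec.dim X)}"
    let ?i = "vec.dim X"
    have "X \<in> Sub UNIV ?i" using X by (auto simp: Sub_def subspaces_def)
    then show "X \<in> C" using lev[of ?i] dim_subset_UNIV_cart_gen[of X] X by auto
  qed
qed

lemma alternate:
  fixes x :: "nat \<Rightarrow> real"
  assumes "\<forall>i<v. x i + x (Suc i) = 1"
  shows "i \<le> v \<Longrightarrow> x i = (if even i then x 0 else 1 - x 0)"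
proof (induction i)
  case 0 then show ?case by simp
next
  case (Suc i)
  have "x i + x (Suc i) = 1" using assms Suc.prems by simp
  then have e: "x (Suc i) = 1 - x i" by linarith
  have ih: "x i = (if even i then x 0 else 1 - x 0)" using Suc by simp
  show ?case
  proof (cases "even i")
    case True
    then have "x i = x 0" using ih by simp
    then have "x (Suc i) = 1 - x 0" using e by linarith
    then show ?thesis using True by simp
  next
    case False
    then have "x i = 1 - x 0" using ih by simp
    then have "x (Suc i) = x 0" using e by linarith
    then show ?thesis using False by simp
  qed
qed

lemma max_eq:
  fixes K :: "('a::{field,finite}^'n) set set"
  assumes "is_code 2 K" "\<And>C :: ('a^'n) set set. is_code 2 C \<Longrightarrow> card C \<le> card K"
  shows "max_code_size (T::('a^'n) itself) 2 = card K"
  unfolding max_code_size_def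
proof (rule Max_eqI)
  have "{card C |C :: ('a^'n) set set. is_code 2 C} \<subseteq> card ` (UNIV :: ('a^'n) set set set)"
  proof
    fix y assume "y \<in> {card C |C :: ('a^'n) set set. is_code 2 C}"
    then obtain C :: "('a^'n) set set" where "y = card C" by blast
    then show "y \<in> card ` (UNIV :: ('a^'n) set set set)" by (rule range_eqI)
  qed
  moreover have "finite (card ` (UNIV :: ('a^'n) set set set))" by simp
  ultimately show "finite {card C |C :: ('a^'n) set set. is_code 2 C}" by (rule finite_subset)
next
  fix y assume "y \<in> {card C |C :: ('a^'n) set set. is_code 2 C}"
  then obtain C :: "('a^'n) set set" where "y = card C" "is_code 2 C" by blast
  then show "y \<le> card K" using assms(2) by simp
next
  show "card K \<in> {card C |C :: ('a^'n) set set. is_code 2 C}" using assms by blast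
qed

lemma perp_isometry: "dS_isometry (perp :: ('a::{field,finite}^'n) set \<Rightarrow> _)"
  unfolding dS_isometry_def
proof
  show "bij_betw perp subspaces (subspaces :: ('a^'n) set set)"
    by (rule bij_betw_byWitness[where f'=perp]) (auto simp: subspaces_def perp_perp subspace_perp)
  show "\<forall>X\<in>subspaces. \<forall>Y\<in>subspaces. subspace_dist (perp X) (perp Y) = subspace_dist X (Y :: ('a^'n) set)"
    by (auto simp: subspaces_def dist_perp)
qed

lemma perp_even_odd:
  assumes "odd CARD('n)"
  shows "perp ` {X \<in> subspaces. even (vec.dim X)} = {X :: ('a::{field,finite}^'n) set \<in> subspaces. odd (vec.dim X)}"
proof
  show "perp ` {X \<in> subspaces. even (vec.dim X)} \<subseteq> {X :: ('a^'n) set \<in> subspaces. odd (vec.dim X)}"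
  proof clarify
    fix X :: "('a^'n) set" assume X: "X \<in> subspaces" "even (vec.dim X)"
    have "vec.dim X \<le> CARD('n)" by (rule dim_subset_UNIV_cart_gen)
    then show "perp X \<in> subspaces \<and> odd (vec.dim (perp X))"
      using X assms by (auto simp: subspaces_def subspace_perp dim_perp)
  qed
  show "{X :: ('a^'n) set \<in> subspaces. odd (vec.dim X)} \<subseteq> perp ` {X \<in> subspaces. even (vec.dim X)}"
  proof clarify
    fix Y :: "('a^'n) set" assume Y: "Y \<in> subspaces" "odd (vec.dim Y)"
    have "vec.dim Y \<le> CARD('n)" by (rule dim_subset_UNIV_cart_gen)
    then have "perp Y \<in> {X \<in> subspaces. even (vec.dim X)}"
      using Y assms by (auto simp: subspaces_def subspace_perp dim_perp)
    moreover have "perp (perp Y) = Y" using Y by (simp add: subspaces_def perp_perp)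
    ultimately show "Y \<in> perp ` {X \<in> subspaces. even (vec.dim X)}" by (metis image_eqI)
  qed
qed

theorem mainTheorem13:
  fixes T :: "('a::{field,finite} ^ 'n) itself"
  defines "q \<equiv> CARD('a)" and "v \<equiv> CARD('n)"
  shows
   "(\<forall>k. v = 2 * k \<longrightarrow>
       max_code_size T 2 = (\<Sum>i\<in>{i. i \<le> v \<and> i mod 2 = k mod 2}. gauss_binom q v i) \<and>
       (\<forall>C :: ('a ^ 'n) set set. is_code 2 C \<and> card C = max_code_size T 2 \<longleftrightarrow>
          C = {X \<in> subspaces. vec.dim X mod 2 = k mod 2}))
    \<and>
    (\<forall>k. v = 2 * k + 1 \<longrightarrow>
       max_code_size T 2 = (\<Sum>i\<in>{i. i \<le> v \<and> even i}. gauss_binom q v i) \<and>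
       max_code_size T 2 = (\<Sum>i\<in>{i. i \<le> v \<and> odd i}. gauss_binom q v i) \<and>
       {C :: ('a ^ 'n) set set. is_code 2 C \<and> card C = max_code_size T 2} =
          {{X \<in> subspaces. even (vec.dim X)}, {X \<in> subspaces. odd (vec.dim X)}} \<and>
       {X \<in> subspaces. even (vec.dim X)} \<noteq> {X :: ('a ^ 'n) set \<in> subspaces. odd (vec.dim X)} \<and>
       codes_isomorphic {X :: ('a ^ 'n) set \<in> subspaces. even (vec.dim X)}
                        {X \<in> subspaces. odd (vec.dim X)})"
proof -
  define NR where "NR = (\<lambda>i. real (card (Sub (UNIV::('a^'n) set) i)))"
  define xs where "xs = (\<lambda>(C::('a^'n) set set) i. real (card (C \<inter> Sub UNIV i)) / NR i)"
  have sym: "\<And>i. i \<le> CARD('n) \<Longrightarrow> NR (CARD('n) - i) = NR i"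
    unfolding NR_def using Nsym by (metis (no_types, lifting))
  have N0: "NR 0 = 1" unfolding NR_def by (simp add: N0_one)
  have N0p: "NR 0 > 0" using N0 by simp
  have incr: "\<And>j. 1 \<le> j \<Longrightarrow> 2 * j \<le> CARD('n) \<Longrightarrow> NR (j-1) < NR j"
  proof -
    fix j :: nat assume "1 \<le> j" "2 * j \<le> CARD('n)"
    then show "NR (j-1) < NR j"
      using count_incr[of "j-1", where 'a='a and 'n='n] unfolding NR_def by simp
  qed
  have sumC: "\<And>C. is_code 2 C \<Longrightarrow> (\<Sum>i\<le>CARD('n). NR i * xs C i) = real (card C)"
    unfolding NR_def xs_def using code_x(3) by blast
  have adjC: "\<And>C i. is_code 2 C \<Longrightarrow> i < CARD('n) \<Longrightarrow> xs C i + xs C (Suc i) \<le> 1"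
    unfolding NR_def xs_def using code_x(1) by blast
  have leC: "\<And>C i. is_code 2 C \<Longrightarrow> xs C i \<le> 1"
    unfolding NR_def xs_def using code_x(2) by blast
  have clsx: "\<And>P i. i \<le> CARD('n) \<Longrightarrow> xs {X \<in> subspaces. P (vec.dim X)} i = (if P i then 1 else 0)"
    unfolding NR_def xs_def using class_x by blast
  have recon: "\<And>C P. C \<subseteq> subspaces \<Longrightarrow> (\<And>i. i \<le> CARD('n) \<Longrightarrow> xs C i = (if P i then 1 else 0))
      \<Longrightarrow> C = {X \<in> subspaces. P (vec.dim X)}"
    unfolding NR_def xs_def using x_reconstruct by blast
  have clcode: "\<And>P p. (\<And>i. P i \<longleftrightarrow> i mod 2 = p) \<Longrightarrow> is_code 2 {X :: ('a^'n) set \<in> subspaces. P (vec.dim X)}"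
    by (rule parity_code) auto
  have gsum: "\<And>P. (\<Sum>i\<in>{i. i \<le> CARD('n) \<and> P i}. gauss_binom CARD('a) CARD('n) i)
           = card {X :: ('a^'n) set. X \<in> subspaces \<and> P (vec.dim X)}"
    by (simp add: card_class gauss_eq_card)
  have part1: "\<forall>k. CARD('n) = 2 * k \<longrightarrow>
       max_code_size T 2 = (\<Sum>i\<in>{i. i \<le> CARD('n) \<and> i mod 2 = k mod 2}. gauss_binom CARD('a) CARD('n) i) \<and>
       (\<forall>C :: ('a ^ 'n) set set. is_code 2 C \<and> card C = max_code_size T 2 \<longleftrightarrow>
          C = {X \<in> subspaces. vec.dim X mod 2 = k mod 2})"
  proof (intro allI impI)
    fix k assume v: "CARD('n) = 2 * k"
    have k1: "k \<ge> 1" using v by (metis One_nat_def Suc_leI gr0I mult_0_right zero_less_card_finite)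
    let ?P = "\<lambda>i. i mod 2 = k mod 2"
    let ?K = "{X :: ('a^'n) set \<in> subspaces. ?P (vec.dim X)}"
    let ?B = "AA NR k + AA NR (k-1) + yy NR k"
    have symv: "\<And>i. i \<le> CARD('n) \<Longrightarrow> NR (CARD('n) - i) = NR i" by (rule sym)
    have incrk: "\<And>j. 1 \<le> j \<Longrightarrow> j \<le> k \<Longrightarrow> NR (j-1) < NR j" using incr v by simp
    have mid: "2 * NR (k-1) < NR k"
      using count_mid[OF v k1, where 'a='a] unfolding NR_def by (simp flip: of_nat_mult)
    let ?S = "\<lambda>x. (\<Sum>i\<le>CARD('n). NR i * x i)"
    have EM1: "\<And>x. (\<And>i. i < CARD('n) \<Longrightarrow> x i + x (Suc i) \<le> 1) \<Longrightarrow> x k \<le> 1 \<Longrightarrow> ?S x \<le> ?B"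
      by (rule even_main(1)[of "CARD('n)" k NR, OF v k1 symv N0p incrk mid])
    have EM2: "\<And>x. (\<And>i. i < CARD('n) \<Longrightarrow> x i + x (Suc i) \<le> 1) \<Longrightarrow> x k \<le> 1 \<Longrightarrow> ?S x = ?B
        \<Longrightarrow> (\<forall>i<CARD('n). x i + x (Suc i) = 1) \<and> x k = 1"
      by (rule even_main(2)[of "CARD('n)" k NR, OF v k1 symv N0p incrk mid])
    have EM3: "\<And>x. (\<And>i. i < CARD('n) \<Longrightarrow> x i + x (Suc i) \<le> 1) \<Longrightarrow> x k \<le> 1
        \<Longrightarrow> (\<forall>i<CARD('n). x i + x (Suc i) = 1) \<Longrightarrow> x k = 1 \<Longrightarrow> ?S x = ?B"
      by (rule even_main(3)[of "CARD('n)" k NR, OF v k1 symv N0p incrk mid])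
    have Kcode: "is_code 2 ?K" by (rule clcode[of _ "k mod 2"]) simp
    have Kx: "\<And>i. i \<le> CARD('n) \<Longrightarrow> xs ?K i = (if ?P i then 1 else 0)" by (rule clsx)
    have Kadj: "\<forall>i<CARD('n). xs ?K i + xs ?K (Suc i) = 1"
      using Kx by (auto simp: Suc_le_eq) presburger+
    have KB: "real (card ?K) = ?B"
    proof -
      have xk: "xs ?K k = 1" using Kx[of k] v by simp
      have "?S (xs ?K) = ?B" by (rule EM3) (use Kadj xk in auto)
      then show ?thesis using sumC[OF Kcode] by simp
    qed
    have CB: "real (card C) \<le> ?B" if c: "is_code 2 C" for C :: "('a^'n) set set"
    proof -
      have "?S (xs C) \<le> ?B" by (rule EM1) (use adjC[OF c] leC[OF c] in auto)
      then show ?thesis using sumC[OF c] by simp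
    qed
    have le: "card C \<le> card ?K" if c: "is_code 2 C" for C :: "('a^'n) set set"
    proof -
      have "real (card C) \<le> real (card ?K)" using CB[OF c] KB by linarith
      then show ?thesis by (simp only: of_nat_le_iff)
    qed
    have mx: "max_code_size T 2 = card ?K" by (rule max_eq[OF Kcode le])
    show "max_code_size T 2 = (\<Sum>i\<in>{i. i \<le> CARD('n) \<and> ?P i}. gauss_binom CARD('a) CARD('n) i) \<and>
       (\<forall>C :: ('a ^ 'n) set set. is_code 2 C \<and> card C = max_code_size T 2 \<longleftrightarrow> C = ?K)"
    proof (intro conjI allI)
      show "max_code_size T 2 = (\<Sum>i\<in>{i. i \<le> CARD('n) \<and> ?P i}. gauss_binom CARD('a) CARD('n) i)"
        using mx gsum[of ?P] by simp
    next
      fix C :: "('a^'n) set set"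
      show "is_code 2 C \<and> card C = max_code_size T 2 \<longleftrightarrow> C = ?K"
      proof
      assume "C = ?K"
      then show "is_code 2 C \<and> card C = max_code_size T 2" using Kcode mx by simp
    next
      assume a: "is_code 2 C \<and> card C = max_code_size T 2"
      then have eqB: "(\<Sum>i\<le>CARD('n). NR i * xs C i) = ?B" using sumC KB mx by simp
      have "(\<forall>i<CARD('n). xs C i + xs C (Suc i) = 1) \<and> xs C k = 1"
        by (rule EM2) (use eqB adjC[OF a[THEN conjunct1]] leC[OF a[THEN conjunct1]] in auto)
      then have alt: "\<And>i. i \<le> CARD('n) \<Longrightarrow> xs C i = (if even i then xs C 0 else 1 - xs C 0)"
        and xk: "xs C k = 1" using alternate by blast+
      have "xs C k = (if even k then xs C 0 else 1 - xs C 0)" using alt[of k] v by simp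
      then have x0: "xs C 0 = (if even k then 1 else 0)" using xk by (auto split: if_splits)
      have xi: "xs C i = (if ?P i then 1 else 0)" if i: "i \<le> CARD('n)" for i
      proof -
        have e: "xs C i = (if even i then xs C 0 else 1 - xs C 0)" using i by (rule alt)
        show ?thesis using e x0
          by (cases "even i"; cases "even k") (simp_all add: even_iff_mod_2_eq_zero odd_iff_mod_2_eq_one)
      qed
      have cs: "C \<subseteq> subspaces" using a by (simp add: is_code_def)
      show "C = ?K" by (rule recon[of C "?P", OF cs xi])
    qed
    qed
  qed
  have part2: "\<forall>k. CARD('n) = 2 * k + 1 \<longrightarrow>
       max_code_size T 2 = (\<Sum>i\<in>{i. i \<le> CARD('n) \<and> even i}. gauss_binom CARD('a) CARD('n) i) \<and>
       max_code_size T 2 = (\<Sum>i\<in>{i. i \<le> CARD('n) \<and> odd i}. gauss_binom CARD('a) CARD('n) i) \<and>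
       {C :: ('a ^ 'n) set set. is_code 2 C \<and> card C = max_code_size T 2} =
          {{X \<in> subspaces. even (vec.dim X)}, {X \<in> subspaces. odd (vec.dim X)}} \<and>
       {X \<in> subspaces. even (vec.dim X)} \<noteq> {X :: ('a ^ 'n) set \<in> subspaces. odd (vec.dim X)} \<and>
       codes_isomorphic {X :: ('a ^ 'n) set \<in> subspaces. even (vec.dim X)}
                        {X \<in> subspaces. odd (vec.dim X)}"
  proof (intro allI impI)
    fix k assume v: "CARD('n) = 2 * k + 1"
    let ?E = "{X :: ('a^'n) set \<in> subspaces. even (vec.dim X)}"
    let ?O = "{X :: ('a^'n) set \<in> subspaces. odd (vec.dim X)}"
    let ?B = "2 * AA NR k + yy NR k"
    have incrk: "\<And>j. 1 \<le> j \<Longrightarrow> j \<le> k \<Longrightarrow> NR (j-1) < NR j" using incr v by simp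
    let ?S = "\<lambda>x. (\<Sum>i\<le>CARD('n). NR i * x i)"
    have OM1: "\<And>x. (\<And>i. i < CARD('n) \<Longrightarrow> x i + x (Suc i) \<le> 1) \<Longrightarrow> ?S x \<le> ?B"
      by (rule odd_main(1)[of "CARD('n)" k NR, OF v sym N0p incrk])
    have OM2: "\<And>x. (\<And>i. i < CARD('n) \<Longrightarrow> x i + x (Suc i) \<le> 1) \<Longrightarrow> ?S x = ?B
        \<Longrightarrow> (\<forall>i<CARD('n). x i + x (Suc i) = 1)"
      by (rule odd_main(2)[of "CARD('n)" k NR, OF v sym N0p incrk])
    have OM3: "\<And>x. (\<And>i. i < CARD('n) \<Longrightarrow> x i + x (Suc i) \<le> 1)
        \<Longrightarrow> (\<forall>i<CARD('n). x i + x (Suc i) = 1) \<Longrightarrow> ?S x = ?B"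
      by (rule odd_main(3)[of "CARD('n)" k NR, OF v sym N0p incrk])
    have Ecode: "is_code 2 ?E" by (rule clcode[of _ 0]) (simp add: even_iff_mod_2_eq_zero)
    have Ocode: "is_code 2 ?O" by (rule clcode[of _ 1]) (simp add: odd_iff_mod_2_eq_one)
    have Ex: "\<And>i. i \<le> CARD('n) \<Longrightarrow> xs ?E i = (if even i then 1 else 0)" by (rule clsx)
    have Ox: "\<And>i. i \<le> CARD('n) \<Longrightarrow> xs ?O i = (if odd i then 1 else 0)" by (rule clsx)
    have Eadj: "\<forall>i<CARD('n). xs ?E i + xs ?E (Suc i) = 1" using Ex by (auto simp: Suc_le_eq)
    have Oadj: "\<forall>i<CARD('n). xs ?O i + xs ?O (Suc i) = 1" using Ox by (auto simp: Suc_le_eq)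
    have "?S (xs ?E) = ?B" by (rule OM3) (use Eadj in auto)
    then have EB: "real (card ?E) = ?B" using sumC[OF Ecode] by simp
    have "?S (xs ?O) = ?B" by (rule OM3) (use Oadj in auto)
    then have OB: "real (card ?O) = ?B" using sumC[OF Ocode] by simp
    have CB: "real (card C) \<le> ?B" if c: "is_code 2 C" for C :: "('a^'n) set set"
    proof -
      have "?S (xs C) \<le> ?B" by (rule OM1) (use adjC[OF c] in auto)
      then show ?thesis using sumC[OF c] by simp
    qed
    have le: "card C \<le> card ?E" if c: "is_code 2 C" for C :: "('a^'n) set set"
    proof -
      have "real (card C) \<le> real (card ?E)" using CB[OF c] EB by linarith
      then show ?thesis by (simp only: of_nat_le_iff)
    qed
    have mx: "max_code_size T 2 = card ?E" by (rule max_eq[OF Ecode le])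
    have EO: "card ?E = card ?O" using EB OB by simp
    have z: "{0} \<in> ?E" "{0} \<notin> ?O" by (auto simp: subspaces_def)
    show "max_code_size T 2 = (\<Sum>i\<in>{i. i \<le> CARD('n) \<and> even i}. gauss_binom CARD('a) CARD('n) i) \<and>
       max_code_size T 2 = (\<Sum>i\<in>{i. i \<le> CARD('n) \<and> odd i}. gauss_binom CARD('a) CARD('n) i) \<and>
       {C :: ('a ^ 'n) set set. is_code 2 C \<and> card C = max_code_size T 2} = {?E, ?O} \<and>
       ?E \<noteq> ?O \<and> codes_isomorphic ?E ?O"
    proof (intro conjI)
      show "max_code_size T 2 = (\<Sum>i\<in>{i. i \<le> CARD('n) \<and> even i}. gauss_binom CARD('a) CARD('n) i)"
        using mx gsum[of even] by simp
      show "max_code_size T 2 = (\<Sum>i\<in>{i. i \<le> CARD('n) \<and> odd i}. gauss_binom CARD('a) CARD('n) i)"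
        using mx EO gsum[of odd] by simp
      show "?E \<noteq> ?O" using z by blast
      have "odd CARD('n)" using v by simp
      then have "perp ` ?E = ?O" by (rule perp_even_odd)
      then show "codes_isomorphic ?E ?O" unfolding codes_isomorphic_def
        using perp_isometry[where 'a='a and 'n='n] by blast
      show "{C :: ('a ^ 'n) set set. is_code 2 C \<and> card C = max_code_size T 2} = {?E, ?O}"
      proof (intro set_eqI iffI)
        fix C :: "('a^'n) set set"
        assume "C \<in> {?E, ?O}"
        then show "C \<in> {C. is_code 2 C \<and> card C = max_code_size T 2}"
          using Ecode Ocode mx EO by auto
      next
        fix C :: "('a^'n) set set"
        assume "C \<in> {C. is_code 2 C \<and> card C = max_code_size T 2}"
        then have a: "is_code 2 C" "card C = max_code_size T 2" by auto
        then have eqB: "(\<Sum>i\<le>CARD('n). NR i * xs C i) = ?B" using sumC EB mx by simp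
        have "\<forall>i<CARD('n). xs C i + xs C (Suc i) = 1"
          by (rule OM2) (use eqB adjC[OF a(1)] in auto)
        then have alt: "\<And>i. i \<le> CARD('n) \<Longrightarrow> xs C i = (if even i then xs C 0 else 1 - xs C 0)"
          using alternate by blast
        have Cs: "C \<subseteq> subspaces" using a by (simp add: is_code_def)
        have "card (C \<inter> Sub UNIV 0) \<le> card (Sub (UNIV::('a^'n) set) 0)" by (intro card_mono) auto
        then have "card (C \<inter> Sub UNIV 0) \<le> 1" by (simp add: N0_one)
        then have "card (C \<inter> Sub UNIV 0) = 0 \<or> card (C \<inter> Sub UNIV 0) = 1" by linarith
        then have "xs C 0 = 0 \<or> xs C 0 = 1" using N0 by (auto simp: xs_def)
        then show "C \<in> {?E, ?O}"
        proof
          assume "xs C 0 = 0"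
          then have "xs C i = (if odd i then 1 else 0)" if i: "i \<le> CARD('n)" for i
            using alt[OF i] by simp
          then have "C = ?O" by (rule recon[of C odd, OF Cs])
          then show ?thesis by simp
        next
          assume "xs C 0 = 1"
          then have "xs C i = (if even i then 1 else 0)" if i: "i \<le> CARD('n)" for i
            using alt[OF i] by simp
          then have "C = ?E" by (rule recon[of C even, OF Cs])
          then show ?thesis by simp
        qed
      qed
    qed
  qed
  show ?thesis unfolding q_def v_def using part1 part2 by blast
qed

end
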